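(* Let $n\geqslant 2$ and $d\geqslant 1$ be integers. Let $\mathfrak{ut}_n(\mathbb{C})$ be the Lie algebra of upper triangular complex $n\times n$ matrices with basis $\{E_{ij}\mid 1\leqslant i\leqslant j\leqslant n\}$, and assign the variable $x_i$ to $E_{ii}$ ($1\leqslant i\leqslant n$) and the variable $x_{ij}$ to $E_{ij}$ ($1\leqslant i<j\leqslant n$). Then the coefficient algebra of $\mathfrak{ut}_n(\mathbb{C})$ on $S^d(\mathbb{C}^n)$ with respect to this basis, a subalgebra of $\mathbb{C}[x_i,x_{ij}]$, is equal to the ring of symmetric polynomials $\mathbb{C}[x_1,\dots,x_n]^{S_n}$ in the diagonal variables, where $S_n$ permutes $x_1,\dots,x_n$. In particular it is isomorphic to $\mathbb{C}[x_1,\dots,x_n]^{S_n}$.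
   Context: Let $\mathfrak{g}$ be a finite-dimensional Lie algebra over a field $k$ with a fixed basis $\{g_1,\dots,g_N\}$, and $V$ an $m$-dimensional representation; write $[g]$ for the matrix of $g\in\mathfrak g$ acting on $V$ (in any basis of $V$). The characteristic polynomial of $\mathfrak g$ on $V$ is $\varphi_{\mathfrak g}(V)=\det(x_0 I+x_1[g_1]+\cdots+x_N[g_N])$, a polynomial in variables $x_0,\dots,x_N$ (one variable $x_0$ for the identity and one for each basis element). Writing $\varphi_{\mathfrak g}(V)=x_0^m+c_1x_0^{m-1}+\cdots+c_m$ with $c_i\in k[x_1,\dots,x_N]$, the coefficient algebra $B_{\mathfrak g}(V)$ is the $k$-subalgebra $k[c_1,\dots,c_m]$ of $k[x_1,\dots,x_N]$. Here $E_{ij}$ is the matrix unit with $1$ in position $(i,j)$ and $0$ elsewhere. $\mathbb{C}^n$ is the standard representation of $\mathfrak{gl}_n(\mathbb{C})$ (and of its subalgebras) with standard basis $e_1,\dots,e_n$, and $S^d(\mathbb{C}^n)$ is its $d$-th symmetric power, on which $g$ acts as a derivation: $g\cdot(e_{i_1}\cdots e_{i_d})=\sum_{s=1}^d e_{i_1}\cdots g(e_{i_s})\cdots e_{i_d}$. *)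

theory Defs
  imports "HOL-Library.Poly_Mapping" "HOL-Library.Multiset_Order"
    "HOL-Combinatorics.Permutations"
    "HOL-Computational_Algebra.Polynomial" "Jordan_Normal_Form.Determinant"
begin

type_synonym ('v, 'a) mpoly = "('v \<Rightarrow>\<^sub>0 nat) \<Rightarrow>\<^sub>0 'a"

definition mvar :: "'v \<Rightarrow> ('v, 'a::comm_ring_1) mpoly" where
  "mvar v = Poly_Mapping.single (Poly_Mapping.single v 1) 1"

definition mconst :: "'a::comm_ring_1 \<Rightarrow> ('v, 'a) mpoly" where
  "mconst c = Poly_Mapping.single 0 c"

inductive_set subalg_gen :: "('v, 'a::comm_ring_1) mpoly set \<Rightarrow> ('v, 'a) mpoly set"
  for S where
  const: "mconst c \<in> subalg_gen S"
| gen: "s \<in> S \<Longrightarrow> s \<in> subalg_gen S"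
| add: "p \<in> subalg_gen S \<Longrightarrow> q \<in> subalg_gen S \<Longrightarrow> p + q \<in> subalg_gen S"
| mult: "p \<in> subalg_gen S \<Longrightarrow> q \<in> subalg_gen S \<Longrightarrow> p * q \<in> subalg_gen S"

definition lie_char_poly ::
  "nat \<Rightarrow> 'v set \<Rightarrow> ('v \<Rightarrow> 'a::comm_ring_1 mat) \<Rightarrow> ('v, 'a) mpoly poly" where
  "lie_char_poly m I rep =
     det (mat m m (\<lambda>(r, s). (if r = s then [:0, 1:] else 0)
            + [: \<Sum>g\<in>I. mvar g * mconst (rep g $$ (r, s)) :]))"

text \<open>Coefficients c_1, ..., c_m of phi = x0^m + c_1 x0^(m-1) + ... + c_m.\<close>
definition coeff_algebra ::
  "nat \<Rightarrow> 'v set \<Rightarrow> ('v \<Rightarrow> 'a::comm_ring_1 mat) \<Rightarrow> ('v, 'a) mpoly set" where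
  "coeff_algebra m I rep =
     subalg_gen {coeff (lie_char_poly m I rep) (m - i) | i. 1 \<le> i \<and> i \<le> m}"

text \<open>Basis of S^d(C^n): monomials e_{i_1}...e_{i_d}, represented as multisets of size d
  over {0..<n}, listed in increasing (multiset) order.\<close>
definition sym_basis :: "nat \<Rightarrow> nat \<Rightarrow> nat multiset list" where
  "sym_basis n d = sorted_list_of_set {M. size M = d \<and> set_mset M \<subseteq> {..<n}}"

text \<open>Matrix of an n x n matrix g acting as a derivation on S^d(C^n):
  g(e_{i_1}...e_{i_d}) = sum_s e_{i_1}...g(e_{i_s})...e_{i_d}, g(e_b) = sum_a g_{ab} e_a.
  Entry (N, M) is the coefficient of basis vector N in g applied to basis vector M.\<close>
definition sym_action_entry ::
  "nat \<Rightarrow> (nat \<Rightarrow> nat \<Rightarrow> 'a::comm_ring_1) \<Rightarrow> nat multiset \<Rightarrow> nat multiset \<Rightarrow> 'a" where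
  "sym_action_entry n g N M =
     (\<Sum>b\<in>set_mset M. of_nat (count M b) *
        (\<Sum>a<n. if N = add_mset a (M - {#b#}) then g a b else 0))"

definition sym_power_mat :: "nat \<Rightarrow> nat \<Rightarrow> (nat \<Rightarrow> nat \<Rightarrow> 'a::comm_ring_1) \<Rightarrow> 'a mat" where
  "sym_power_mat n d g =
     (let B = sym_basis n d in
      mat (length B) (length B) (\<lambda>(r, s). sym_action_entry n g (B ! r) (B ! s)))"

text \<open>Matrix unit E_{ij} (indices 0-based).\<close>
definition matrix_unit :: "nat \<Rightarrow> nat \<Rightarrow> nat \<Rightarrow> nat \<Rightarrow> 'a::comm_ring_1" where
  "matrix_unit i j = (\<lambda>a b. if a = i \<and> b = j then 1 else 0)"

text \<open>Basis of ut_n: E_{ij}, i <= j < n. The variable (i,i) is x_i and (i,j), i<j, is x_ij.\<close>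
definition ut_basis :: "nat \<Rightarrow> (nat \<times> nat) set" where
  "ut_basis n = {(i, j). i \<le> j \<and> j < n}"

definition symmetric_diag_polys :: "nat \<Rightarrow> (nat \<times> nat, 'a::comm_ring_1) mpoly set" where
  "symmetric_diag_polys n =
     {p. (\<forall>\<mu>\<in>Poly_Mapping.keys p. \<forall>v\<in>Poly_Mapping.keys \<mu>. \<exists>i<n. v = (i, i)) \<and>
         (\<forall>\<sigma>. \<sigma> permutes {..<n} \<longrightarrow>
            (\<forall>\<mu>. Poly_Mapping.lookup p (Poly_Mapping.map_key (\<lambda>(i, j). (\<sigma> i, \<sigma> j)) \<mu>)
                 = Poly_Mapping.lookup p \<mu>))}"

end

theory Submission
  imports Defs
begin


context
  fixes n :: nat and X :: "nat \<Rightarrow> 'a::comm_ring_1"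
begin

definition Wset :: "nat \<Rightarrow> nat multiset set" where
  "Wset e = {M. size M = e \<and> set_mset M \<subseteq> {..<n}}"

definition wt :: "nat multiset \<Rightarrow> 'a" where
  "wt M = (\<Sum>a<n. of_nat (count M a) * X a)"

definition Pw :: "nat \<Rightarrow> nat \<Rightarrow> 'a" where
  "Pw k e = (\<Sum>M\<in>Wset e. wt M ^ k)"

definition ps :: "nat \<Rightarrow> 'a" where
  "ps r = (\<Sum>a<n. X a ^ r)"

lemma finite_Wset: "finite (Wset e)"
proof -
  have "Wset e = multisets_of_size {..<n} e" unfolding Wset_def multisets_of_size_def by auto
  thus ?thesis by auto
qed

lemma wt_add_rep: "a < n \<Longrightarrow> wt (M + replicate_mset j a) = wt M + of_nat j * X a"
proof -
  assume a: "a < n"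
  have "wt (M + replicate_mset j a) = (\<Sum>b<n. of_nat (count M b) * X b + (if b = a then of_nat j * X a else 0))"
    unfolding wt_def by (rule sum.cong) (auto simp: algebra_simps)
  also have "\<dots> = wt M + of_nat j * X a"
    using a by (simp add: sum.distrib wt_def)
  finally show ?thesis .
qed

lemma wt_expand: "wt M * y = (\<Sum>a<n. \<Sum>j\<in>{1..count M a}. X a * y)"
  unfolding wt_def sum_distrib_right
  by (rule sum.cong) (auto simp: mult.commute)

lemma reindex_step:
  assumes a: "a < n"
  shows "(\<Sum>M\<in>Wset d. \<Sum>j\<in>{1..count M a}. F M j) =
         (\<Sum>j\<in>{1..d}. \<Sum>M\<in>Wset (d - j). F (M + replicate_mset j a) j)"
proof -
  have "(\<Sum>M\<in>Wset d. \<Sum>j\<in>{1..count M a}. F M j) = (\<Sum>(M,j)\<in>Sigma (Wset d) (\<lambda>M. {1..count M a}). F M j)"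
    by (rule sum.Sigma) (auto simp: finite_Wset)
  also have "\<dots> = (\<Sum>(j,M)\<in>Sigma {1..d} (\<lambda>j. Wset (d - j)). F (M + replicate_mset j a) j)"
  proof (rule sum.reindex_bij_witness[where j = "\<lambda>(M,j). (j, M - replicate_mset j a)"
        and i = "\<lambda>(j,M). (M + replicate_mset j a, j)"], goal_cases)
    case (1 p)
    obtain M j where pe: "p = (M, j)" by (cases p)
    have sub: "replicate_mset j a \<subseteq># M" using 1 pe by (auto simp: subseteq_mset_def count_replicate_mset)
    show ?case using sub pe by (auto simp: subset_mset.diff_add)
  next
    case (2 p)
    obtain M j where pe: "p = (M, j)" by (cases p)
    have sub: "replicate_mset j a \<subseteq># M" using 2 pe by (auto simp: subseteq_mset_def count_replicate_mset)
    have "j \<le> count M a" using 2 pe by auto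
    also have "count M a \<le> size M" by (rule count_le_size)
    finally have jd: "j \<le> size M" .
    show ?case using 2 pe jd sub by (auto simp: Wset_def size_Diff_submset dest: in_diffD)
  next
    case (3 q)
    then show ?case by auto
  next
    case (4 q)
    then show ?case using a by (auto simp: Wset_def)
  next
    case (5 p)
    obtain M j where pe: "p = (M, j)" by (cases p)
    have sub: "replicate_mset j a \<subseteq># M" using 5 pe by (auto simp: subseteq_mset_def count_replicate_mset)
    show ?case using sub pe by (auto simp: subset_mset.diff_add)
  qed
  also have "\<dots> = (\<Sum>j\<in>{1..d}. \<Sum>M\<in>Wset (d - j). F (M + replicate_mset j a) j)"
    by (rule sum.Sigma[symmetric]) (auto simp: finite_Wset)
  finally show ?thesis .
qed

lemma key_identity:
  assumes k: "k \<ge> 1"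
  shows "Pw k d = (\<Sum>j\<in>{1..d}. \<Sum>i<k. of_nat ((k-1) choose i) * of_nat j ^ (k-1-i) * Pw i (d-j) * ps (k-i))"
proof -
  have kk: "k = Suc (k-1)" using k by simp
  have "Pw k d = (\<Sum>M\<in>Wset d. wt M * wt M ^ (k-1))"
    unfolding Pw_def by (subst kk) simp
  also have "\<dots> = (\<Sum>M\<in>Wset d. \<Sum>a<n. \<Sum>j\<in>{1..count M a}. X a * wt M ^ (k-1))"
    by (simp only: wt_expand)
  also have "\<dots> = (\<Sum>a<n. \<Sum>M\<in>Wset d. \<Sum>j\<in>{1..count M a}. X a * wt M ^ (k-1))"
    by (rule sum.swap)
  also have "\<dots> = (\<Sum>a<n. \<Sum>j\<in>{1..d}. \<Sum>M\<in>Wset (d-j). X a * wt (M + replicate_mset j a) ^ (k-1))"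
    by (intro sum.cong refl reindex_step) simp
  also have "\<dots> = (\<Sum>a<n. \<Sum>j\<in>{1..d}. \<Sum>M\<in>Wset (d-j). \<Sum>i<k.
        of_nat ((k-1) choose i) * of_nat j ^ (k-1-i) * wt M ^ i * X a ^ (k-i))"
  proof (intro sum.cong refl)
    fix a j M assume a: "a \<in> {..<n}"
    have "X a * wt (M + replicate_mset j a) ^ (k-1) = X a * (wt M + of_nat j * X a) ^ (k-1)"
      using a by (simp only: wt_add_rep lessThan_iff)
    also have "\<dots> = X a * (\<Sum>i\<le>k-1. of_nat ((k-1) choose i) * wt M ^ i * (of_nat j * X a) ^ (k-1-i))"
      by (simp only: binomial_ring)
    also have "\<dots> = (\<Sum>i\<le>k-1. of_nat ((k-1) choose i) * of_nat j ^ (k-1-i) * wt M ^ i * X a ^ (k-i))"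
      unfolding sum_distrib_left
    proof (intro sum.cong refl)
      fix i assume i: "i \<in> {..k-1}"
      have e: "k - i = Suc (k-1-i)" using i k by auto
      show "X a * (of_nat ((k-1) choose i) * wt M ^ i * (of_nat j * X a) ^ (k-1-i)) =
            of_nat ((k-1) choose i) * of_nat j ^ (k-1-i) * wt M ^ i * X a ^ (k-i)"
        unfolding e power_Suc power_mult_distrib by (simp only: ac_simps)
    qed
    also have "{..k-1} = {..<k}" using k by auto
    finally show "X a * wt (M + replicate_mset j a) ^ (k-1) = (\<Sum>i<k.
        of_nat ((k-1) choose i) * of_nat j ^ (k-1-i) * wt M ^ i * X a ^ (k-i))" .
  qed
  also have "\<dots> = (\<Sum>j\<in>{1..d}. \<Sum>a<n. \<Sum>M\<in>Wset (d-j). \<Sum>i<k.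
        of_nat ((k-1) choose i) * of_nat j ^ (k-1-i) * wt M ^ i * X a ^ (k-i))"
    by (rule sum.swap)
  also have "\<dots> = (\<Sum>j\<in>{1..d}. \<Sum>i<k. \<Sum>a<n. \<Sum>M\<in>Wset (d-j).
        of_nat ((k-1) choose i) * of_nat j ^ (k-1-i) * wt M ^ i * X a ^ (k-i))"
  proof (rule sum.cong[OF refl])
    fix j
    have "(\<Sum>a<n. \<Sum>M\<in>Wset (d-j). \<Sum>i<k.
        of_nat ((k-1) choose i) * of_nat j ^ (k-1-i) * wt M ^ i * X a ^ (k-i)) =
        (\<Sum>a<n. \<Sum>i<k. \<Sum>M\<in>Wset (d-j).
        of_nat ((k-1) choose i) * of_nat j ^ (k-1-i) * wt M ^ i * X a ^ (k-i))"
      by (rule sum.cong[OF refl]) (rule sum.swap)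
    also have "\<dots> = (\<Sum>i<k. \<Sum>a<n. \<Sum>M\<in>Wset (d-j).
        of_nat ((k-1) choose i) * of_nat j ^ (k-1-i) * wt M ^ i * X a ^ (k-i))"
      by (rule sum.swap)
    finally show "(\<Sum>a<n. \<Sum>M\<in>Wset (d-j). \<Sum>i<k.
        of_nat ((k-1) choose i) * of_nat j ^ (k-1-i) * wt M ^ i * X a ^ (k-i)) =
        (\<Sum>i<k. \<Sum>a<n. \<Sum>M\<in>Wset (d-j).
        of_nat ((k-1) choose i) * of_nat j ^ (k-1-i) * wt M ^ i * X a ^ (k-i))" .
  qed
  also have "\<dots> = (\<Sum>j\<in>{1..d}. \<Sum>i<k. of_nat ((k-1) choose i) * of_nat j ^ (k-1-i) * Pw i (d-j) * ps (k-i))"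
  proof (intro sum.cong refl)
    fix j i
    show "(\<Sum>a<n. \<Sum>M\<in>Wset (d-j).
        of_nat ((k-1) choose i) * of_nat j ^ (k-1-i) * wt M ^ i * X a ^ (k-i)) =
        of_nat ((k-1) choose i) * of_nat j ^ (k-1-i) * Pw i (d-j) * ps (k-i)"
      unfolding Pw_def ps_def sum_distrib_left sum_distrib_right
      by (simp only: ac_simps)
  qed
  finally show ?thesis .
qed

end


lemma mconst_add: "mconst (a + b) = (mconst a + mconst b :: ('v,'a::comm_ring_1) mpoly)"
  unfolding mconst_def by (rule single_add)
lemma mconst_mult: "mconst (a * b) = (mconst a * mconst b :: ('v,'a::comm_ring_1) mpoly)"
  unfolding mconst_def by (simp add: mult_single)
lemma mconst_0: "mconst 0 = (0 :: ('v,'a::comm_ring_1) mpoly)"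
  unfolding mconst_def by simp
lemma mconst_1: "mconst 1 = (1 :: ('v,'a::comm_ring_1) mpoly)"
  unfolding mconst_def by simp
lemma of_nat_mconst: "(of_nat k :: ('v,'a::comm_ring_1) mpoly) = mconst (of_nat k)"
  unfolding mconst_def by simp

lemma sg_0: "0 \<in> subalg_gen S"
  using subalg_gen.const[of 0 S] by (simp add: mconst_0)
lemma sg_1: "1 \<in> subalg_gen S"
  using subalg_gen.const[of 1 S] by (simp add: mconst_1)
lemma sg_of_nat: "of_nat k \<in> subalg_gen S"
  using subalg_gen.const[of "of_nat k" S] by (simp add: of_nat_mconst)
lemma sg_uminus: "p \<in> subalg_gen S \<Longrightarrow> - p \<in> subalg_gen S"
proof -
  assume p: "p \<in> subalg_gen S"
  have "mconst (-1) = (-1 :: ('a,'b) mpoly)" by (simp add: mconst_def single_uminus)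
  hence "- p = mconst (-1) * p" by simp
  thus ?thesis using subalg_gen.mult[OF subalg_gen.const p] by simp
qed
lemma sg_diff: "p \<in> subalg_gen S \<Longrightarrow> q \<in> subalg_gen S \<Longrightarrow> p - q \<in> subalg_gen S"
  by (simp only: diff_conv_add_uminus) (intro subalg_gen.add sg_uminus)
lemma sg_sum: "(\<And>x. x \<in> A \<Longrightarrow> f x \<in> subalg_gen S) \<Longrightarrow> sum f A \<in> subalg_gen S"
proof (induction A rule: infinite_finite_induct)
  case (infinite A) then show ?case by (simp add: sg_0)
next
  case empty then show ?case by (simp add: sg_0)
next
  case (insert x F) then show ?case by (simp add: subalg_gen.add)
qed
lemma sg_prod: "(\<And>x. x \<in> A \<Longrightarrow> f x \<in> subalg_gen S) \<Longrightarrow> prod f A \<in> subalg_gen S"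
proof (induction A rule: infinite_finite_induct)
  case (infinite A) then show ?case by (simp add: sg_1)
next
  case empty then show ?case by (simp add: sg_1)
next
  case (insert x F) then show ?case by (simp add: subalg_gen.mult)
qed
lemma sg_power: "p \<in> subalg_gen S \<Longrightarrow> p ^ k \<in> subalg_gen S"
  by (induction k) (simp_all add: sg_1 subalg_gen.mult)
lemma sg_mono: assumes "S \<subseteq> subalg_gen T" "p \<in> subalg_gen S" shows "p \<in> subalg_gen T"
  using assms(2)
proof (induction p rule: subalg_gen.induct)
  case (const c) then show ?case by (rule subalg_gen.const)
next
  case (gen s) then show ?case using assms(1) by auto
next
  case (add p q) then show ?case by (simp add: subalg_gen.add)
next
  case (mult p q) then show ?case by (simp add: subalg_gen.mult)
qed

section \<open>Generation of power sums\<close>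

lemma Wset_0: "Wset n 0 = {{#}}"
  unfolding Wset_def by auto

lemma Pw_in_sg:
  fixes X :: "nat \<Rightarrow> ('v, 'a::comm_ring_1) mpoly"
  assumes ps: "\<And>s. 1 \<le> s \<Longrightarrow> s < k \<Longrightarrow> ps n X s \<in> subalg_gen G"
  shows "i < k \<Longrightarrow> Pw n X i e \<in> subalg_gen G"
proof (induction i arbitrary: e rule: less_induct)
  case (less i)
  show ?case
  proof (cases "i = 0")
    case True
    then show ?thesis by (simp add: Pw_def sg_of_nat)
  next
    case False
    then have i1: "i \<ge> 1" by simp
    show ?thesis
      unfolding key_identity[OF i1]
    proof (intro sg_sum subalg_gen.mult sg_of_nat sg_power)
      fix j i' assume i': "i' \<in> {..<i}"
      show "Pw n X i' (e - j) \<in> subalg_gen G" using less i' by auto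
      show "ps n X (i - i') \<in> subalg_gen G" using less i' by (intro ps) auto
    qed
  qed
qed

lemma ps_in_sg:
  fixes X :: "nat \<Rightarrow> ('v, complex) mpoly"
  assumes Pw: "\<And>k. k \<ge> 1 \<Longrightarrow> Pw n X k d \<in> subalg_gen G" and d: "d \<ge> 1"
  shows "k \<ge> 1 \<Longrightarrow> ps n X k \<in> subalg_gen G"
proof (induction k rule: less_induct)
  case (less k)
  have IH: "\<And>s. 1 \<le> s \<Longrightarrow> s < k \<Longrightarrow> ps n X s \<in> subalg_gen G" using less by auto
  define c :: nat where "c = (\<Sum>j\<in>{1..d}. j ^ (k-1) * card (Wset n (d-j)))"
  define R where "R = (\<Sum>j\<in>{1..d}. \<Sum>i\<in>{1..<k}. of_nat ((k-1) choose i) * of_nat j ^ (k-1-i) * Pw n X i (d-j) * ps n X (k-i))"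
  have R: "R \<in> subalg_gen G"
    unfolding R_def
  proof (intro sg_sum subalg_gen.mult sg_of_nat sg_power)
    fix j i assume i: "i \<in> {1..<k}"
    show "Pw n X i (d - j) \<in> subalg_gen G" using i IH by (intro Pw_in_sg[of k]) auto
    show "ps n X (k - i) \<in> subalg_gen G" using i by (intro IH) auto
  qed
  have split: "\<And>f. (\<Sum>i<k. f i) = f 0 + (\<Sum>i\<in>{1..<k}. f i)"
    using less.prems by (simp add: atLeast0LessThan[symmetric] sum.atLeast_Suc_lessThan)
  have P0: "\<And>e. Pw n X 0 e = of_nat (card (Wset n e))" by (simp add: Pw_def)
  have "(\<Sum>j\<in>{1..d}. of_nat ((k-1) choose 0) * of_nat j ^ (k-1-0) * Pw n X 0 (d-j) * ps n X (k-0))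
      = of_nat c * ps n X k"
    unfolding c_def P0 by (simp add: sum_distrib_right)
  then have "Pw n X k d = of_nat c * ps n X k + R"
    unfolding key_identity[OF less.prems] split sum.distrib R_def by simp
  hence eq: "of_nat c * ps n X k = Pw n X k d - R" by simp
  have cps: "of_nat c * ps n X k \<in> subalg_gen G"
    unfolding eq using Pw[OF less.prems] R by (rule sg_diff)
  moreover have "c \<ge> 1"
  proof -
    have "d ^ (k-1) * card (Wset n (d-d)) \<le> c"
      unfolding c_def using d by (intro member_le_sum) auto
    moreover have "d ^ (k-1) \<ge> 1" using d by simp
    ultimately show ?thesis by (simp add: Wset_0)
  qed
  have "mconst (1 / of_nat c) * (of_nat c * ps n X k) \<in> subalg_gen G"
    by (rule subalg_gen.mult[OF subalg_gen.const cps])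
  moreover have "mconst (1 / of_nat c) * (of_nat c * ps n X k) = ps n X k"
    using \<open>c \<ge> 1\<close> by (simp add: of_nat_mconst mult.assoc[symmetric] mconst_mult[symmetric] mconst_1)
  ultimately show ?case by simp
qed


section \<open>Newton identities\<close>

definition newton :: "(nat \<Rightarrow> 'a::comm_ring_1) \<Rightarrow> (nat \<Rightarrow> 'a) \<Rightarrow> bool" where
  "newton e P \<longleftrightarrow> (\<forall>m. of_nat (Suc m) * e (Suc m) = (\<Sum>i\<le>m. (-1) ^ (m - i) * e i * P (Suc m - i)))"

definition shf :: "(nat \<Rightarrow> 'a::zero) \<Rightarrow> nat \<Rightarrow> 'a" where
  "shf e i = (case i of 0 \<Rightarrow> 0 | Suc j \<Rightarrow> e j)"

lemma telescope_part:
  fixes e :: "nat \<Rightarrow> 'a::comm_ring_1"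
  shows "(\<Sum>i\<le>m. (-1) ^ (m - i) * (e i + y * shf e i) * y ^ (Suc m - i)) = y * e m"
proof (induction m)
  case 0
  then show ?case by (simp add: shf_def)
next
  case (Suc m)
  have "(\<Sum>i\<le>Suc m. (-1) ^ (Suc m - i) * (e i + y * shf e i) * y ^ (Suc (Suc m) - i))
      = (e (Suc m) + y * e m) * y + (\<Sum>i\<le>m. (-1) ^ (Suc m - i) * (e i + y * shf e i) * y ^ (Suc (Suc m) - i))"
    by (simp add: shf_def)
  also have "(\<Sum>i\<le>m. (-1) ^ (Suc m - i) * (e i + y * shf e i) * y ^ (Suc (Suc m) - i))
      = - y * (\<Sum>i\<le>m. (-1) ^ (m - i) * (e i + y * shf e i) * y ^ (Suc m - i))"
    unfolding sum_distrib_left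
  proof (intro sum.cong refl)
    fix i assume "i \<in> {..m}"
    then have a: "Suc m - i = Suc (m - i)" and b: "Suc (Suc m) - i = Suc (Suc m - i)" by auto
    show "(-1) ^ (Suc m - i) * (e i + y * shf e i) * y ^ (Suc (Suc m) - i) =
          - y * ((-1) ^ (m - i) * (e i + y * shf e i) * y ^ (Suc m - i))"
      unfolding a b by (simp add: algebra_simps)
  qed
  finally show ?case using Suc by (simp add: algebra_simps)
qed

lemma newton_step:
  fixes e P :: "nat \<Rightarrow> 'a::comm_ring_1"
  assumes N: "newton e P"
  shows "newton (\<lambda>i. e i + y * shf e i) (\<lambda>j. P j + y ^ j)"
  unfolding newton_def
proof
  fix m
  have second: "(\<Sum>i\<le>m. (-1) ^ (m - i) * (y * shf e i) * P (Suc m - i)) = y * (of_nat m * e m)"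
  proof (cases m)
    case 0 then show ?thesis by (simp add: shf_def)
  next
    case (Suc m')
    have "(\<Sum>i\<le>m. (-1) ^ (m - i) * (y * shf e i) * P (Suc m - i))
        = (\<Sum>i\<le>m'. (-1) ^ (m - Suc i) * (y * e i) * P (Suc m - Suc i))"
      unfolding Suc by (subst sum.atMost_Suc_shift) (simp add: shf_def)
    also have "\<dots> = y * (\<Sum>i\<le>m'. (-1) ^ (m' - i) * e i * P (Suc m' - i))"
      unfolding sum_distrib_left Suc by (intro sum.cong refl) (simp add: algebra_simps)
    also have "\<dots> = y * (of_nat m * e m)"
      using N unfolding newton_def Suc by metis
    finally show ?thesis .
  qed
  have first: "(\<Sum>i\<le>m. (-1) ^ (m - i) * e i * P (Suc m - i)) = of_nat (Suc m) * e (Suc m)"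
    using N unfolding newton_def by metis
  have "(\<Sum>i\<le>m. (-1) ^ (m - i) * (e i + y * shf e i) * (P (Suc m - i) + y ^ (Suc m - i)))
      = (\<Sum>i\<le>m. (-1) ^ (m - i) * e i * P (Suc m - i))
        + (\<Sum>i\<le>m. (-1) ^ (m - i) * (y * shf e i) * P (Suc m - i))
        + (\<Sum>i\<le>m. (-1) ^ (m - i) * (e i + y * shf e i) * y ^ (Suc m - i))"
    by (simp add: sum.distrib[symmetric] algebra_simps)
  also have "\<dots> = of_nat (Suc m) * e (Suc m) + y * (of_nat m * e m) + y * e m"
    unfolding first second telescope_part ..
  also have "\<dots> = of_nat (Suc m) * (e (Suc m) + y * shf e (Suc m))"
    by (simp add: shf_def algebra_simps)
  finally show "of_nat (Suc m) * (e (Suc m) + y * shf e (Suc m)) =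
      (\<Sum>i\<le>m. (-1) ^ (m - i) * (e i + y * shf e i) * (P (Suc m - i) + y ^ (Suc m - i)))" by simp
qed

lemma coeff_lin_mult: fixes y :: "'a::comm_ring_1" shows "coeff ([:1, y:] * p) i = coeff p i + y * shf (coeff p) i"
  by (simp add: mult_pCons_left shf_def coeff_pCons split: nat.split)

lemma newton_prod:
  fixes f :: "'b \<Rightarrow> 'a::comm_ring_1"
  assumes "finite A"
  shows "newton (coeff (\<Prod>x\<in>A. [:1, f x:])) (\<lambda>k. \<Sum>x\<in>A. f x ^ k)"
  using assms
proof (induction A rule: finite_induct)
  case empty
  show ?case unfolding newton_def by simp
next
  case (insert y A)
  have "newton (\<lambda>i. coeff (\<Prod>x\<in>A. [:1, f x:]) i + f y * shf (coeff (\<Prod>x\<in>A. [:1, f x:])) i)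
                (\<lambda>j. (\<Sum>x\<in>A. f x ^ j) + f y ^ j)"
    by (rule newton_step[OF insert.IH])
  moreover have "coeff (\<Prod>x\<in>insert y A. [:1, f x:]) = (\<lambda>i. coeff (\<Prod>x\<in>A. [:1, f x:]) i + f y * shf (coeff (\<Prod>x\<in>A. [:1, f x:])) i)"
  proof -
    have "(\<Prod>x\<in>insert y A. [:1, f x:]) = [:1, f y:] * (\<Prod>x\<in>A. [:1, f x:])"
      using insert by simp
    then show ?thesis by (simp only: coeff_lin_mult fun_eq_iff) simp
  qed
  moreover have "(\<lambda>k. \<Sum>x\<in>insert y A. f x ^ k) = (\<lambda>j. (\<Sum>x\<in>A. f x ^ j) + f y ^ j)"
    using insert by (simp add: add.commute)
  ultimately show ?case by simp
qed

lemma coeff0_prod: "finite A \<Longrightarrow> coeff (\<Prod>x\<in>A. [:1, f x:]) 0 = 1"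
  by (induction A rule: finite_induct) (simp_all add: coeff_lin_mult shf_def)

lemma coeff_high_prod: "finite A \<Longrightarrow> i > card A \<Longrightarrow> coeff (\<Prod>x\<in>A. [:1, f x:]) i = 0"
proof (induction A arbitrary: i rule: finite_induct)
  case empty then show ?case by simp
next
  case (insert y A)
  have "(\<Prod>x\<in>insert y A. [:1, f x:]) = [:1, f y:] * (\<Prod>x\<in>A. [:1, f x:])"
    using insert by simp
  moreover obtain i' where i: "i = Suc i'" using insert by (cases i) auto
  ultimately show ?case using insert by (simp only: coeff_lin_mult) (simp add: shf_def)
qed

lemma coeff_lin_mult': fixes y :: "'a::comm_ring_1" shows "coeff ([:y, 1:] * p) i = y * coeff p i + shf (coeff p) i"
  by (simp add: mult_pCons_left shf_def coeff_pCons split: nat.split)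

lemma coeff_high_prod': "finite A \<Longrightarrow> i > card A \<Longrightarrow> coeff (\<Prod>x\<in>A. [:f x, 1:]) i = 0"
proof (induction A arbitrary: i rule: finite_induct)
  case empty then show ?case by simp
next
  case (insert y A)
  have "(\<Prod>x\<in>insert y A. [:f x, 1:]) = [:f y, 1:] * (\<Prod>x\<in>A. [:f x, 1:])"
    using insert by simp
  moreover obtain i' where i: "i = Suc i'" using insert by (cases i) auto
  ultimately show ?case using insert by (simp only: coeff_lin_mult') (simp add: shf_def)
qed

lemma coeff_reflect_prod:
  fixes f :: "'b \<Rightarrow> 'a::comm_ring_1"
  shows "finite A \<Longrightarrow> i \<le> card A \<Longrightarrow> coeff (\<Prod>x\<in>A. [:f x, 1:]) (card A - i) = coeff (\<Prod>x\<in>A. [:1, f x:]) i"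
proof (induction A arbitrary: i rule: finite_induct)
  case empty then show ?case by simp
next
  case (insert y A)
  let ?Q = "\<Prod>x\<in>A. [:f x, 1:]" and ?R = "\<Prod>x\<in>A. [:1, f x:]"
  have Q: "(\<Prod>x\<in>insert y A. [:f x, 1:]) = [:f y, 1:] * ?Q" using insert by simp
  have R: "(\<Prod>x\<in>insert y A. [:1, f x:]) = [:1, f y:] * ?R" using insert by simp
  have c: "card (insert y A) = Suc (card A)" using insert by simp
  show ?case
  proof (cases i)
    case 0
    have "coeff ?Q (Suc (card A)) = 0" using insert by (intro coeff_high_prod') auto
    moreover have "coeff ?Q (card A - 0) = coeff ?R 0" using insert by (intro insert.IH) auto
    ultimately show ?thesis unfolding Q R c 0 coeff_lin_mult coeff_lin_mult' by (simp add: shf_def)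
  next
    case (Suc i')
    then have i': "i' \<le> card A" using insert c by auto
    show ?thesis
    proof (cases "i' = card A")
      case True
      have "coeff ?R (Suc (card A)) = 0" using insert by (intro coeff_high_prod) auto
      moreover have "coeff ?Q (card A - card A) = coeff ?R (card A)" using insert by (intro insert.IH) auto
      ultimately show ?thesis unfolding Q R c Suc coeff_lin_mult coeff_lin_mult' True by (simp add: shf_def)
    next
      case False
      then have lt: "i' < card A" using i' by simp
      have e1: "coeff ?Q (card A - i') = coeff ?R i'" using insert lt by (intro insert.IH) auto
      have e2: "coeff ?Q (card A - Suc i') = coeff ?R (Suc i')" using insert lt by (intro insert.IH) auto
      have e3: "Suc (card A) - Suc i' = Suc (card A - Suc i')" using lt by simp
      have e4: "card A - i' = Suc (card A - Suc i')" using lt by simp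
      show ?thesis unfolding Q R c Suc coeff_lin_mult coeff_lin_mult' e3
        using e1 e2 e4 by (simp add: shf_def)
    qed
  qed
qed

lemma newton_in_sg:
  fixes e P :: "nat \<Rightarrow> ('v, 'a::comm_ring_1) mpoly"
  assumes N: "newton e P" and e0: "e 0 = 1" and e: "\<And>i. i \<ge> 1 \<Longrightarrow> e i \<in> subalg_gen G"
  shows "k \<ge> 1 \<Longrightarrow> P k \<in> subalg_gen G"
proof (induction k rule: less_induct)
  case (less k)
  then obtain m where k: "k = Suc m" by (cases k) auto
  define R where "R = (\<Sum>i\<in>{1..m}. (-1) ^ (m - i) * e i * P (Suc m - i))"
  have R: "R \<in> subalg_gen G"
    unfolding R_def
  proof (intro sg_sum subalg_gen.mult sg_power sg_uminus sg_1)
    fix i assume i: "i \<in> {1..m}"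
    show "e i \<in> subalg_gen G" using i e by auto
    show "P (Suc m - i) \<in> subalg_gen G" using i k by (intro less.IH) auto
  qed
  have split: "{..m} = insert 0 {1..m}" by auto
  have "of_nat (Suc m) * e (Suc m) = (-1) ^ m * P (Suc m) + R"
    using N unfolding newton_def R_def by (simp add: split e0)
  hence eq: "(-1) ^ m * P (Suc m) = of_nat (Suc m) * e (Suc m) - R" by (simp add: algebra_simps)
  have "(-1) ^ m * ((-1) ^ m * P (Suc m)) \<in> subalg_gen G"
    unfolding eq by (intro subalg_gen.mult sg_power sg_uminus sg_1 sg_diff sg_of_nat e R) simp
  moreover have "(-1) ^ m * ((-1) ^ m * P (Suc m)) = P (Suc m)"
    by (simp add: mult.assoc[symmetric] power_mult_distrib[symmetric])
  ultimately show ?case unfolding k by simp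
qed


section \<open>The characteristic polynomial as a product\<close>

lemma sym_basis_props:
  shows "set (sym_basis n d) = Wset n d" "distinct (sym_basis n d)" "sorted (sym_basis n d)"
proof -
  have e: "{M. size M = d \<and> set_mset M \<subseteq> {..<n}} = Wset n d" unfolding Wset_def by simp
  show "set (sym_basis n d) = Wset n d" "distinct (sym_basis n d)" "sorted (sym_basis n d)"
    unfolding sym_basis_def e using finite_Wset by auto
qed

lemma sorted_distinct_nth_less:
  fixes xs :: "'a::linorder list"
  assumes "sorted xs" "distinct xs" "s < r" "r < length xs"
  shows "xs ! s < xs ! r"
proof -
  have "xs ! s \<le> xs ! r" using assms by (simp add: sorted_iff_nth_mono)
  moreover have "xs ! s \<noteq> xs ! r" using assms by (simp add: nth_eq_iff_index_eq)
  ultimately show ?thesis by simp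
qed

lemma inner_gen:
  assumes i: "i < n"
  shows "(\<Sum>a<n. if N = add_mset a K then (matrix_unit i j a b :: 'a::comm_ring_1) else 0)
      = (if b = j \<and> N = add_mset i K then 1 else 0)"
proof -
  have "(\<Sum>a<n. if N = add_mset a K then (matrix_unit i j a b :: 'a) else 0)
     = (\<Sum>a<n. if a = i then (if b = j \<and> N = add_mset i K then 1 else 0) else 0)"
    by (rule sum.cong) (auto simp: matrix_unit_def)
  also have "\<dots> = (if b = j \<and> N = add_mset i K then 1 else 0)"
    using i by (subst sum.delta) auto
  finally show ?thesis .
qed

lemma entry_val:
  assumes i: "i < n"
  shows "sym_action_entry n (matrix_unit i j) N M =
     (if j \<in># M \<and> N = add_mset i (M - {#j#}) then (of_nat (count M j) :: 'a::comm_ring_1) else 0)"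
proof -
  have inner: "\<And>b. (\<Sum>a<n. if N = add_mset a (M - {#b#}) then (matrix_unit i j a b :: 'a) else 0)
      = (if b = j \<and> N = add_mset i (M - {#b#}) then 1 else 0)"
  proof -
    fix b
    have "(\<Sum>a<n. if N = add_mset a (M - {#b#}) then (matrix_unit i j a b :: 'a) else 0)
       = (\<Sum>a<n. if a = i then (if b = j \<and> N = add_mset i (M - {#b#}) then 1 else 0) else 0)"
      by (rule sum.cong) (auto simp: matrix_unit_def)
    also have "\<dots> = (if b = j \<and> N = add_mset i (M - {#b#}) then 1 else 0)"
      using i by (subst sum.delta) auto
    finally show "(\<Sum>a<n. if N = add_mset a (M - {#b#}) then (matrix_unit i j a b :: 'a) else 0)
      = (if b = j \<and> N = add_mset i (M - {#b#}) then 1 else 0)" .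
  qed
  have "sym_action_entry n (matrix_unit i j) N M =
     (\<Sum>b\<in>set_mset M. of_nat (count M b) * (if b = j \<and> N = add_mset i (M - {#b#}) then 1 else 0))"
    unfolding sym_action_entry_def
    by (simp only: inner_gen[OF i])
  also have "\<dots> = 
     (\<Sum>b\<in>set_mset M. if b = j then (if N = add_mset i (M - {#j#}) then of_nat (count M j) else 0) else 0)"
    by (rule sum.cong) auto
  also have "\<dots> = (if j \<in># M \<and> N = add_mset i (M - {#j#}) then (of_nat (count M j) :: 'a) else 0)"
    by (subst sum.delta) auto
  finally show ?thesis .
qed

lemma lower_zero:
  assumes "i \<le> j" "j < n" "M < N"
  shows "sym_action_entry n (matrix_unit i j) N M = (0 :: 'a::comm_ring_1)"
proof -
  have "\<not> (j \<in># M \<and> N = add_mset i (M - {#j#}))"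
  proof
    assume h: "j \<in># M \<and> N = add_mset i (M - {#j#})"
    then have M: "M = add_mset j (M - {#j#})" by simp
    show False
    proof (cases "i = j")
      case True then show False using h M assms by simp
    next
      case False
      then have "i < j" using assms by simp
      then have "add_mset i (M - {#j#}) < add_mset j (M - {#j#})" by (rule add_mset_lt_left_lt)
      then show False using h M assms by simp
    qed
  qed
  moreover have "i < n" using assms by simp
  ultimately show ?thesis by (subst entry_val) auto
qed

lemma diag_val:
  assumes "i \<le> j" "j < n"
  shows "sym_action_entry n (matrix_unit i j) M M = (if i = j then of_nat (count M i) else (0 :: 'a::comm_ring_1))"
proof -
  have "i \<noteq> j \<Longrightarrow> M \<noteq> add_mset i (M - {#j#})"
  proof
    assume "i \<noteq> j" "M = add_mset i (M - {#j#})"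
    then have "count M i = count (add_mset i (M - {#j#})) i" by simp
    also have "\<dots> = count M i + 1" using \<open>i \<noteq> j\<close> by simp
    finally show False by simp
  qed
  moreover have "i < n" using assms by simp
  moreover have "count M i = 0 \<or> M = add_mset i (M - {#i#})"
    by (metis count_eq_zero_iff insert_DiffM)
  ultimately show ?thesis using assms by (subst entry_val) auto
qed

lemma finite_ut_basis: "finite (ut_basis n)"
proof -
  have "ut_basis n \<subseteq> {..<n} \<times> {..<n}" unfolding ut_basis_def by auto
  then show ?thesis by (rule finite_subset) auto
qed

lemma sum_ut_diag:
  assumes "\<And>i j. (i, j) \<in> ut_basis n \<Longrightarrow> i \<noteq> j \<Longrightarrow> F (i, j) = 0"
  shows "(\<Sum>g\<in>ut_basis n. F g) = (\<Sum>a<n. F (a, a))"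
proof -
  have "(\<Sum>g\<in>ut_basis n. F g) = (\<Sum>g\<in>(\<lambda>a. (a, a)) ` {..<n}. F g)"
    using assms by (intro sum.mono_neutral_right finite_ut_basis) (auto simp: ut_basis_def)
  also have "\<dots> = (\<Sum>a<n. F (a, a))"
    by (subst sum.reindex) (auto simp: inj_on_def)
  finally show ?thesis .
qed

abbreviation Xd :: "nat \<Rightarrow> (nat \<times> nat, complex) mpoly" where
  "Xd a \<equiv> mvar (a, a)"

lemma char_poly_prod:
  fixes n d :: nat
  defines "rep \<equiv> (\<lambda>(i, j). sym_power_mat n d (matrix_unit i j) :: complex mat)"
  shows "lie_char_poly (length (sym_basis n d)) (ut_basis n) rep = (\<Prod>M\<in>Wset n d. [: wt n Xd M, 1 :])"
proof -
  let ?B = "sym_basis n d"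
  let ?m = "length ?B"
  define A where "A = mat ?m ?m (\<lambda>(r, s). (if r = s then [:0, 1:] else 0)
            + [: \<Sum>g\<in>ut_basis n. mvar g * mconst (rep g $$ (r, s)) :])"
  have repval: "\<And>i j r s. r < ?m \<Longrightarrow> s < ?m \<Longrightarrow> rep (i, j) $$ (r, s) = sym_action_entry n (matrix_unit i j) (?B ! r) (?B ! s)"
    unfolding rep_def sym_power_mat_def by (simp add: Let_def)
  have ut: "upper_triangular A"
    unfolding upper_triangular_def
  proof (intro allI impI)
    fix r s assume r: "r < dim_row A" and sr: "s < r"
    then have rm: "r < ?m" "s < ?m" by (auto simp: A_def)
    have lt: "?B ! s < ?B ! r"
      using sym_basis_props rm sr by (intro sorted_distinct_nth_less) auto
    have "(\<Sum>g\<in>ut_basis n. mvar g * mconst (rep g $$ (r, s))) = 0"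
    proof (intro sum.neutral ballI)
      fix g assume g: "g \<in> ut_basis n"
      obtain i j where gij: "g = (i, j)" by (cases g)
      have "rep g $$ (r, s) = 0" using g gij rm lt by (simp add: repval lower_zero ut_basis_def)
      then show "mvar g * mconst (rep g $$ (r, s)) = 0" by (simp add: mconst_0)
    qed
    then show "A $$ (r, s) = 0" using rm sr by (simp add: A_def)
  qed
  have diag: "\<And>r. r < ?m \<Longrightarrow> A $$ (r, r) = [: wt n Xd (?B ! r), 1 :]"
  proof -
    fix r assume rm: "r < ?m"
    have "(\<Sum>g\<in>ut_basis n. mvar g * mconst (rep g $$ (r, r))) = (\<Sum>a<n. mvar (a, a) * mconst (rep (a, a) $$ (r, r)))"
      by (rule sum_ut_diag) (auto simp: repval rm diag_val ut_basis_def mconst_0)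
    also have "\<dots> = wt n Xd (?B ! r)"
      unfolding wt_def
      by (rule sum.cong) (auto simp: repval rm diag_val of_nat_mconst mult.commute)
    finally show "A $$ (r, r) = [: wt n Xd (?B ! r), 1 :]" using rm by (simp add: A_def)
  qed
  have dimA: "dim_row A = ?m" by (simp add: A_def)
  have "lie_char_poly ?m (ut_basis n) rep = det A"
    unfolding lie_char_poly_def A_def ..
  also have "\<dots> = prod_list (diag_mat A)"
    by (rule det_upper_triangular[OF ut, where n = ?m]) (simp add: A_def)
  also have "\<dots> = prod_list (map (\<lambda>r. [: wt n Xd (?B ! r), 1 :]) [0..<?m])"
    unfolding diag_mat_def by (intro arg_cong[where f=prod_list] map_cong) (simp_all add: dimA diag)
  also have "map (\<lambda>r. [: wt n Xd (?B ! r), 1 :]) [0..<?m] = map (\<lambda>M. [: wt n Xd M, 1 :]) ?B"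
    by (metis (no_types, lifting) map_eq_conv map_map map_nth o_apply)
  also have "prod_list \<dots> = (\<Prod>M\<in>set ?B. [: wt n Xd M, 1 :])"
    using sym_basis_props(2) by (rule prod.distinct_set_conv_list[symmetric])
  also have "\<dots> = (\<Prod>M\<in>Wset n d. [: wt n Xd M, 1 :])"
    using sym_basis_props(1) by simp
  finally show ?thesis .
qed


section \<open>Augmented monomial sums\<close>

definition DL :: "nat \<Rightarrow> nat \<Rightarrow> nat list set" where
  "DL n l = {xs. distinct xs \<and> length xs = l \<and> set xs \<subseteq> {..<n}}"

definition Tm :: "nat list \<Rightarrow> nat list \<Rightarrow> (nat \<times> nat, complex) mpoly" where
  "Tm xs mu = (\<Prod>i<length mu. Xd (xs ! i) ^ (mu ! i))"

definition atil :: "nat \<Rightarrow> nat list \<Rightarrow> (nat \<times> nat, complex) mpoly" where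
  "atil n mu = (\<Sum>xs\<in>DL n (length mu). Tm xs mu)"

lemma finite_DL: "finite (DL n l)"
proof -
  have "DL n l \<subseteq> {xs. set xs \<subseteq> {..<n} \<and> length xs = l}" unfolding DL_def by auto
  then show ?thesis by (rule finite_subset) (rule finite_lists_length_eq, simp)
qed

lemma Tm_cons: "length xs = length mu \<Longrightarrow> Tm (a # xs) (r # mu) = Xd a ^ r * Tm xs mu"
  unfolding Tm_def length_Cons prod.lessThan_Suc_shift by simp

lemma Tm_update:
  assumes j: "j < length mu"
  shows "Tm xs (mu[j := mu ! j + r]) = Xd (xs ! j) ^ r * Tm xs mu"
proof -
  have "Tm xs (mu[j := mu ! j + r]) = (\<Prod>i<length mu. Xd (xs ! i) ^ (if i = j then mu ! j + r else mu ! i))"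
    unfolding Tm_def using j by (intro prod.cong refl) (auto simp: nth_list_update)
  also have "\<dots> = Xd (xs ! j) ^ (mu ! j + r) * (\<Prod>i\<in>{..<length mu} - {j}. Xd (xs ! i) ^ (mu ! i))"
    using j by (subst prod.remove[of _ j]) auto
  also have "\<dots> = Xd (xs ! j) ^ r * (Xd (xs ! j) ^ (mu ! j) * (\<Prod>i\<in>{..<length mu} - {j}. Xd (xs ! i) ^ (mu ! i)))"
    by (simp add: power_add algebra_simps)
  also have "Xd (xs ! j) ^ (mu ! j) * (\<Prod>i\<in>{..<length mu} - {j}. Xd (xs ! i) ^ (mu ! i)) = Tm xs mu"
    unfolding Tm_def using j by (subst prod.remove[of _ j]) auto
  finally show ?thesis .
qed

lemma DL_Suc_sum:
  "(\<Sum>xs\<in>DL n l. \<Sum>a\<in>{..<n} - set xs. g a xs) = (\<Sum>ys\<in>DL n (Suc l). g (hd ys) (tl ys))"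
proof -
  have "(\<Sum>xs\<in>DL n l. \<Sum>a\<in>{..<n} - set xs. g a xs) = (\<Sum>(xs,a)\<in>Sigma (DL n l) (\<lambda>xs. {..<n} - set xs). g a xs)"
    by (rule sum.Sigma) (auto simp: finite_DL)
  also have "\<dots> = (\<Sum>ys\<in>DL n (Suc l). g (hd ys) (tl ys))"
  proof (rule sum.reindex_bij_witness[where j = "\<lambda>(xs,a). a # xs" and i = "\<lambda>ys. (tl ys, hd ys)"], goal_cases)
    case (1 p) then show ?case by (cases p) auto
  next
    case (2 p) then show ?case by (cases p) (auto simp: DL_def)
  next
    case (3 ys) then show ?case by (cases ys) (auto simp: DL_def)
  next
    case (4 ys) then show ?case by (cases ys) (auto simp: DL_def)
  next
    case (5 p) then show ?case by (cases p) auto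
  qed
  finally show ?thesis .
qed

lemma atil_rec:
  "ps n Xd r * atil n mu = atil n (r # mu) + (\<Sum>j<length mu. atil n (mu[j := mu ! j + r]))"
proof -
  let ?l = "length mu"
  have "ps n Xd r * atil n mu = (\<Sum>xs\<in>DL n ?l. \<Sum>a<n. Xd a ^ r * Tm xs mu)"
    unfolding ps_def atil_def sum_product by (rule sum.swap)
  also have "\<dots> = (\<Sum>xs\<in>DL n ?l. (\<Sum>a\<in>{..<n} - set xs. Xd a ^ r * Tm xs mu) + (\<Sum>a\<in>set xs. Xd a ^ r * Tm xs mu))"
    by (intro sum.cong refl sum.subset_diff) (auto simp: DL_def)
  also have "\<dots> = (\<Sum>xs\<in>DL n ?l. \<Sum>a\<in>{..<n} - set xs. Xd a ^ r * Tm xs mu) + (\<Sum>xs\<in>DL n ?l. \<Sum>a\<in>set xs. Xd a ^ r * Tm xs mu)"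
    by (rule sum.distrib)
  also have "(\<Sum>xs\<in>DL n ?l. \<Sum>a\<in>{..<n} - set xs. Xd a ^ r * Tm xs mu) = atil n (r # mu)"
  proof -
    have "(\<Sum>xs\<in>DL n ?l. \<Sum>a\<in>{..<n} - set xs. Xd a ^ r * Tm xs mu) = (\<Sum>ys\<in>DL n (Suc ?l). Xd (hd ys) ^ r * Tm (tl ys) mu)"
      by (rule DL_Suc_sum)
    also have "\<dots> = (\<Sum>ys\<in>DL n (Suc ?l). Tm ys (r # mu))"
    proof (intro sum.cong refl)
      fix ys assume "ys \<in> DL n (Suc ?l)"
      then obtain a xs where ys: "ys = a # xs" "length xs = ?l" by (cases ys) (auto simp: DL_def)
      show "Xd (hd ys) ^ r * Tm (tl ys) mu = Tm ys (r # mu)" using ys by (simp add: Tm_cons)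
    qed
    finally show ?thesis unfolding atil_def by simp
  qed
  also have "(\<Sum>xs\<in>DL n ?l. \<Sum>a\<in>set xs. Xd a ^ r * Tm xs mu) = (\<Sum>j<?l. atil n (mu[j := mu ! j + r]))"
  proof -
    have "(\<Sum>xs\<in>DL n ?l. \<Sum>a\<in>set xs. Xd a ^ r * Tm xs mu) = (\<Sum>xs\<in>DL n ?l. \<Sum>j<?l. Tm xs (mu[j := mu ! j + r]))"
    proof (rule sum.cong[OF refl])
      fix xs assume xs: "xs \<in> DL n ?l"
      have s: "set xs = (\<lambda>j. xs ! j) ` {..<?l}" using xs by (auto simp: DL_def in_set_conv_nth)
      have inj: "inj_on (\<lambda>j. xs ! j) {..<?l}" using xs by (auto simp: DL_def inj_on_def nth_eq_iff_index_eq)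
      have "(\<Sum>a\<in>set xs. Xd a ^ r * Tm xs mu) = (\<Sum>j<?l. Xd (xs ! j) ^ r * Tm xs mu)"
        unfolding s by (subst sum.reindex[OF inj]) simp
      also have "\<dots> = (\<Sum>j<?l. Tm xs (mu[j := mu ! j + r]))"
        by (intro sum.cong refl) (simp add: Tm_update)
      finally show "(\<Sum>a\<in>set xs. Xd a ^ r * Tm xs mu) = (\<Sum>j<?l. Tm xs (mu[j := mu ! j + r]))" .
    qed
    also have "\<dots> = (\<Sum>j<?l. \<Sum>xs\<in>DL n ?l. Tm xs (mu[j := mu ! j + r]))" by (rule sum.swap)
    also have "\<dots> = (\<Sum>j<?l. atil n (mu[j := mu ! j + r]))" unfolding atil_def by simp
    finally show ?thesis .
  qed
  finally show ?thesis .
qed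

definition PSG :: "nat \<Rightarrow> (nat \<times> nat, complex) mpoly set" where
  "PSG n = subalg_gen {ps n Xd k | k. k \<ge> 1}"

lemma ps_PSG: "ps n Xd r \<in> PSG n"
proof (cases "r = 0")
  case True
  then have "ps n Xd r = of_nat n" by (simp add: ps_def)
  then show ?thesis by (simp add: PSG_def sg_of_nat)
next
  case False
  then show ?thesis unfolding PSG_def by (intro subalg_gen.gen) auto
qed

lemma atil_PSG: "atil n mu \<in> PSG n"
proof (induction "length mu" arbitrary: mu rule: less_induct)
  case less
  show ?case
  proof (cases mu)
    case Nil
    have "DL n 0 = {[]}" by (auto simp: DL_def)
    then have "atil n mu = 1" using Nil by (simp add: atil_def Tm_def)
    then show ?thesis by (simp add: PSG_def sg_1)
  next
    case (Cons r mu')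
    have "atil n mu = ps n Xd r * atil n mu' - (\<Sum>j<length mu'. atil n (mu'[j := mu' ! j + r]))"
      unfolding Cons atil_rec by simp
    also have "\<dots> \<in> PSG n"
      unfolding PSG_def
    proof (intro sg_diff subalg_gen.mult sg_sum)
      show "ps n Xd r \<in> subalg_gen {ps n Xd k | k. k \<ge> 1}" using ps_PSG unfolding PSG_def .
      show "atil n mu' \<in> subalg_gen {ps n Xd k | k. k \<ge> 1}" using less Cons unfolding PSG_def by simp
      fix j show "atil n (mu'[j := mu' ! j + r]) \<in> subalg_gen {ps n Xd k | k. k \<ge> 1}"
        using less Cons unfolding PSG_def by simp
    qed
    finally show ?thesis .
  qed
qed


section \<open>Symmetric polynomials are generated by power sums\<close>

lemma mvar_power: "(mvar v :: ('v, 'a::comm_ring_1) mpoly) ^ e = Poly_Mapping.single (Poly_Mapping.single v e) 1"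
proof (induction e)
  case 0 then show ?case by simp
next
  case (Suc e)
  have "(mvar v :: ('v, 'a) mpoly) ^ Suc e = Poly_Mapping.single (Poly_Mapping.single v 1 + Poly_Mapping.single v e) 1"
    using Suc by (simp add: mvar_def mult_single)
  also have "Poly_Mapping.single v 1 + Poly_Mapping.single v e = Poly_Mapping.single v (Suc e)"
    by (simp add: single_add[symmetric])
  finally show ?case .
qed

lemma prod_single: "finite I \<Longrightarrow> (\<Prod>i\<in>I. Poly_Mapping.single (\<alpha> i) (1::'a::comm_ring_1)) = Poly_Mapping.single (\<Sum>i\<in>I. \<alpha> i) 1"
  by (induction I rule: finite_induct) (simp_all add: mult_single)

lemma Tm_single: "Tm xs mu = Poly_Mapping.single (\<Sum>i<length mu. Poly_Mapping.single (xs ! i, xs ! i) (mu ! i)) 1"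
  unfolding Tm_def by (simp add: mvar_power prod_single)

definition diagmono :: "nat \<Rightarrow> (nat \<times> nat \<Rightarrow>\<^sub>0 nat) \<Rightarrow> bool" where
  "diagmono n \<mu> \<longleftrightarrow> (\<forall>v\<in>Poly_Mapping.keys \<mu>. \<exists>i<n. v = (i, i))"

definition nu :: "nat \<Rightarrow> (nat \<Rightarrow> nat) \<Rightarrow> (nat \<times> nat \<Rightarrow>\<^sub>0 nat) \<Rightarrow> (nat \<times> nat \<Rightarrow>\<^sub>0 nat)" where
  "nu n \<sigma> \<mu> = (\<Sum>i<n. Poly_Mapping.single (\<sigma> i, \<sigma> i) (Poly_Mapping.lookup \<mu> (i, i)))"

definition tau :: "(nat \<Rightarrow> nat) \<Rightarrow> nat \<times> nat \<Rightarrow> nat \<times> nat" where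
  "tau \<sigma> = (\<lambda>(i, j). (\<sigma> i, \<sigma> j))"

lemma inj_tau: "inj \<sigma> \<Longrightarrow> inj (tau \<sigma>)"
  unfolding tau_def inj_def by (auto dest: injD)

lemma diagmono_lookup: "diagmono n \<mu> \<Longrightarrow> Poly_Mapping.lookup \<mu> (a, b) \<noteq> 0 \<Longrightarrow> a = b \<and> a < n"
proof -
  assume d: "diagmono n \<mu>" and l: "Poly_Mapping.lookup \<mu> (a, b) \<noteq> 0"
  have "(a, b) \<in> Poly_Mapping.keys \<mu>" by (subst in_keys_iff) (rule l)
  then obtain i where "i < n" "(a, b) = (i, i)" using d unfolding diagmono_def by blast
  then show ?thesis by simp
qed

lemma lookup_nu:
  assumes p: "\<sigma> permutes {..<n}" and dm: "diagmono n \<mu>"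
  shows "Poly_Mapping.lookup (nu n \<sigma> \<mu>) (a, b) = (if a = b then Poly_Mapping.lookup \<mu> (inv_into UNIV \<sigma> a, inv_into UNIV \<sigma> a) else 0)"
proof -
  have bij: "bij \<sigma>" using p by (rule permutes_bij)
  have "Poly_Mapping.lookup (nu n \<sigma> \<mu>) (a, b) = (\<Sum>i<n. Poly_Mapping.lookup \<mu> (i, i) when (\<sigma> i, \<sigma> i) = (a, b))"
    unfolding nu_def lookup_sum lookup_single ..
  also have "\<dots> = (\<Sum>i<n. if i = inv_into UNIV \<sigma> a then (if a = b then Poly_Mapping.lookup \<mu> (i, i) else 0) else 0)"
  proof (intro sum.cong refl)
    fix i
    have e: "\<sigma> i = a \<longleftrightarrow> i = inv_into UNIV \<sigma> a" using bij_inv_eq_iff[OF bij, of i a] by simp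
    show "(Poly_Mapping.lookup \<mu> (i, i) when (\<sigma> i, \<sigma> i) = (a, b)) =
      (if i = inv_into UNIV \<sigma> a then (if a = b then Poly_Mapping.lookup \<mu> (i, i) else 0) else 0)"
      unfolding when_def using e by auto
  qed
  also have "\<dots> = (if a = b then Poly_Mapping.lookup \<mu> (inv_into UNIV \<sigma> a, inv_into UNIV \<sigma> a) else 0)"
    using diagmono_lookup[OF dm, of "inv_into UNIV \<sigma> a" "inv_into UNIV \<sigma> a"] by (subst sum.delta) auto
  finally show ?thesis .
qed

lemma nu_iff:
  assumes p: "\<sigma> permutes {..<n}" and dm: "diagmono n \<mu>"
  shows "nu n \<sigma> \<mu> = \<kappa> \<longleftrightarrow> \<mu> = Poly_Mapping.map_key (tau \<sigma>) \<kappa>"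
proof -
  have bij: "bij \<sigma>" using p by (rule permutes_bij)
  have injt: "inj (tau \<sigma>)" using bij by (intro inj_tau) (simp add: bij_is_inj)
  have mk: "\<And>x :: nat \<times> nat. Poly_Mapping.lookup (Poly_Mapping.map_key (tau \<sigma>) \<kappa>) x = Poly_Mapping.lookup \<kappa> (tau \<sigma> x)"
    using injt by (simp add: map_key.rep_eq)
  have d0: "\<And>a b. a \<noteq> b \<Longrightarrow> Poly_Mapping.lookup \<mu> (a, b) = 0" using diagmono_lookup[OF dm] by blast
  show ?thesis
  proof
    assume h: "nu n \<sigma> \<mu> = \<kappa>"
    show "\<mu> = Poly_Mapping.map_key (tau \<sigma>) \<kappa>"
    proof (rule poly_mapping_eqI)
      fix x :: "nat \<times> nat"
      obtain a b where x: "x = (a, b)" by (cases x)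
      have "Poly_Mapping.lookup \<kappa> (tau \<sigma> x) = Poly_Mapping.lookup (nu n \<sigma> \<mu>) (\<sigma> a, \<sigma> b)"
        using h x by (simp add: tau_def)
      also have "\<dots> = Poly_Mapping.lookup \<mu> (a, b)"
        using bij d0 by (simp add: lookup_nu[OF p dm] bij_is_inj inj_eq)
      finally show "Poly_Mapping.lookup \<mu> x = Poly_Mapping.lookup (Poly_Mapping.map_key (tau \<sigma>) \<kappa>) x"
        using x mk by simp
    qed
  next
    assume h: "\<mu> = Poly_Mapping.map_key (tau \<sigma>) \<kappa>"
    show "nu n \<sigma> \<mu> = \<kappa>"
    proof (rule poly_mapping_eqI)
      fix x :: "nat \<times> nat"
      obtain a b where x: "x = (a, b)" by (cases x)
      have sa: "\<And>a. \<sigma> (inv_into UNIV \<sigma> a) = a" using bij by (simp add: bij_is_surj surj_f_inv_f)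
      show "Poly_Mapping.lookup (nu n \<sigma> \<mu>) x = Poly_Mapping.lookup \<kappa> x"
      proof (cases "a = b")
        case True
        have "Poly_Mapping.lookup (nu n \<sigma> \<mu>) (a, b) = Poly_Mapping.lookup \<mu> (inv_into UNIV \<sigma> a, inv_into UNIV \<sigma> a)"
          using True by (simp only: lookup_nu[OF p dm]) simp
        also have "\<dots> = Poly_Mapping.lookup \<kappa> (a, b)"
          unfolding h mk using sa True by (simp add: tau_def)
        finally show ?thesis using x by simp
      next
        case False
        have "inv_into UNIV \<sigma> a \<noteq> inv_into UNIV \<sigma> b" using False bij by (metis sa)
        then have "Poly_Mapping.lookup \<mu> (inv_into UNIV \<sigma> a, inv_into UNIV \<sigma> b) = 0" by (rule d0)
        then have "Poly_Mapping.lookup \<kappa> (a, b) = 0" using h mk sa by (simp add: tau_def)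
        then show ?thesis using x False by (simp add: lookup_nu[OF p dm])
      qed
    qed
  qed
qed

lemma sym_reconstruct:
  assumes f: "f \<in> symmetric_diag_polys n" and p: "\<sigma> permutes {..<n}"
  shows "(\<Sum>\<mu>\<in>Poly_Mapping.keys f. Poly_Mapping.single (nu n \<sigma> \<mu>) (Poly_Mapping.lookup f \<mu>)) = f"
proof (rule poly_mapping_eqI)
  fix \<kappa>
  have dm: "\<And>\<mu>. \<mu> \<in> Poly_Mapping.keys f \<Longrightarrow> diagmono n \<mu>"
    using f unfolding symmetric_diag_polys_def diagmono_def by blast
  have sym: "Poly_Mapping.lookup f (Poly_Mapping.map_key (tau \<sigma>) \<kappa>) = Poly_Mapping.lookup f \<kappa>"
    using f p unfolding symmetric_diag_polys_def tau_def by blast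
  have "Poly_Mapping.lookup (\<Sum>\<mu>\<in>Poly_Mapping.keys f. Poly_Mapping.single (nu n \<sigma> \<mu>) (Poly_Mapping.lookup f \<mu>)) \<kappa>
      = (\<Sum>\<mu>\<in>Poly_Mapping.keys f. if \<mu> = Poly_Mapping.map_key (tau \<sigma>) \<kappa> then Poly_Mapping.lookup f \<mu> else 0)"
    unfolding lookup_sum lookup_single
    by (intro sum.cong refl) (simp add: nu_iff[OF p dm] when_def)
  also have "\<dots> = Poly_Mapping.lookup f (Poly_Mapping.map_key (tau \<sigma>) \<kappa>)"
  proof (subst sum.delta)
    show "finite (Poly_Mapping.keys f)" by simp
    show "(if Poly_Mapping.map_key (tau \<sigma>) \<kappa> \<in> Poly_Mapping.keys f then Poly_Mapping.lookup f (Poly_Mapping.map_key (tau \<sigma>) \<kappa>) else 0)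
      = Poly_Mapping.lookup f (Poly_Mapping.map_key (tau \<sigma>) \<kappa>)"
      using in_keys_iff by (metis (mono_tags))
  qed
  also have "\<dots> = Poly_Mapping.lookup f \<kappa>" by (rule sym)
  finally show "Poly_Mapping.lookup (\<Sum>\<mu>\<in>Poly_Mapping.keys f. Poly_Mapping.single (nu n \<sigma> \<mu>) (Poly_Mapping.lookup f \<mu>)) \<kappa>
      = Poly_Mapping.lookup f \<kappa>" .
qed


lemma DL_perm:
  assumes xs: "xs \<in> DL n n"
  shows "(\<lambda>i. if i < n then xs ! i else i) permutes {..<n}"
proof (rule bij_imp_permutes)
  have d: "distinct xs" "length xs = n" "set xs \<subseteq> {..<n}" using xs by (auto simp: DL_def)
  have s: "set xs = {..<n}"
    using d by (metis card_lessThan card_subset_eq distinct_card finite_lessThan)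
  show "bij_betw (\<lambda>i. if i < n then xs ! i else i) {..<n} {..<n}"
    unfolding bij_betw_def
  proof
    show "inj_on (\<lambda>i. if i < n then xs ! i else i) {..<n}"
      using d by (auto simp: inj_on_def nth_eq_iff_index_eq)
    have "(\<lambda>i. if i < n then xs ! i else i) ` {..<n} = (\<lambda>i. xs ! i) ` {..<n}" by auto
    also have "\<dots> = set xs" using d by (auto simp: in_set_conv_nth)
    finally show "(\<lambda>i. if i < n then xs ! i else i) ` {..<n} = {..<n}" using s by simp
  qed
qed simp

lemma mconst_single: "mconst c * Poly_Mapping.single \<nu> 1 = Poly_Mapping.single \<nu> (c :: 'a::comm_ring_1)"
  unfolding mconst_def by (simp add: mult_single)

lemma sym_in_PSG:
  assumes f: "f \<in> symmetric_diag_polys n"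
  shows "f \<in> PSG n"
proof -
  define L where "L \<mu> = map (\<lambda>a. Poly_Mapping.lookup \<mu> (a, a)) [0..<n]" for \<mu> :: "nat \<times> nat \<Rightarrow>\<^sub>0 nat"
  define D where "D = DL n n"
  have each: "(\<Sum>\<mu>\<in>Poly_Mapping.keys f. mconst (Poly_Mapping.lookup f \<mu>) * Tm xs (L \<mu>)) = f" if xs: "xs \<in> D" for xs
  proof -
    let ?\<sigma> = "\<lambda>i. if i < n then xs ! i else i"
    have p: "?\<sigma> permutes {..<n}" using xs DL_perm unfolding D_def by blast
    have "Tm xs (L \<mu>) = Poly_Mapping.single (nu n ?\<sigma> \<mu>) 1" for \<mu>
      unfolding Tm_single nu_def L_def by (intro arg_cong2[where f = Poly_Mapping.single] sum.cong refl) auto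
    then have "(\<Sum>\<mu>\<in>Poly_Mapping.keys f. mconst (Poly_Mapping.lookup f \<mu>) * Tm xs (L \<mu>))
        = (\<Sum>\<mu>\<in>Poly_Mapping.keys f. Poly_Mapping.single (nu n ?\<sigma> \<mu>) (Poly_Mapping.lookup f \<mu>))"
      by (simp add: mconst_single)
    also have "\<dots> = f" by (rule sym_reconstruct[OF f p])
    finally show ?thesis .
  qed
  have "(\<Sum>xs\<in>D. f) = (\<Sum>xs\<in>D. \<Sum>\<mu>\<in>Poly_Mapping.keys f. mconst (Poly_Mapping.lookup f \<mu>) * Tm xs (L \<mu>))"
    using each by simp
  also have "\<dots> = (\<Sum>\<mu>\<in>Poly_Mapping.keys f. mconst (Poly_Mapping.lookup f \<mu>) * atil n (L \<mu>))"
    unfolding atil_def sum_distrib_left by (subst sum.swap) (simp add: L_def D_def)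
  finally have eq: "of_nat (card D) * f = (\<Sum>\<mu>\<in>Poly_Mapping.keys f. mconst (Poly_Mapping.lookup f \<mu>) * atil n (L \<mu>))"
    by simp
  have inP: "of_nat (card D) * f \<in> PSG n"
    unfolding eq PSG_def
    by (intro sg_sum subalg_gen.mult subalg_gen.const atil_PSG[unfolded PSG_def])
  have "[0..<n] \<in> D" unfolding D_def DL_def by auto
  then have c: "card D \<ge> 1" using finite_DL[of n n] unfolding D_def
    by (metis One_nat_def Suc_leI card_gt_0_iff empty_iff)
  have "mconst (1 / of_nat (card D)) * (of_nat (card D) * f) \<in> PSG n"
    using inP unfolding PSG_def by (rule subalg_gen.mult[OF subalg_gen.const])
  moreover have "mconst (1 / of_nat (card D)) * (of_nat (card D) * f) = f"
    using c by (simp add: of_nat_mconst mult.assoc[symmetric] mconst_mult[symmetric] mconst_1)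
  ultimately show ?thesis by simp
qed


lemma sym_subset_coeff_algebra:
  fixes n d :: nat
  assumes d: "d \<ge> 1"
  shows "symmetric_diag_polys n \<subseteq> coeff_algebra (length (sym_basis n d)) (ut_basis n)
           (\<lambda>(i, j). sym_power_mat n d (matrix_unit i j) :: complex mat)"
proof -
  let ?rep = "(\<lambda>(i, j). sym_power_mat n d (matrix_unit i j) :: complex mat)"
  let ?m = "length (sym_basis n d)"
  let ?G = "{coeff (lie_char_poly ?m (ut_basis n) ?rep) (?m - i) | i. 1 \<le> i \<and> i \<le> ?m}"
  let ?W = "Wset n d"
  let ?E = "\<Prod>M\<in>?W. [:1, wt n Xd M:]"
  have mW: "?m = card ?W"
    using sym_basis_props(1,2)[of n d] by (metis distinct_card)
  have Q: "lie_char_poly ?m (ut_basis n) ?rep = (\<Prod>M\<in>?W. [: wt n Xd M, 1 :])"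
    by (rule char_poly_prod)
  have e: "coeff ?E i \<in> subalg_gen ?G" if i: "i \<ge> 1" for i
  proof (cases "i \<le> card ?W")
    case True
    have "coeff ?E i = coeff (\<Prod>M\<in>?W. [: wt n Xd M, 1 :]) (card ?W - i)"
      using True finite_Wset by (simp add: coeff_reflect_prod)
    also have "\<dots> = coeff (lie_char_poly ?m (ut_basis n) ?rep) (?m - i)"
      by (subst Q) (simp add: mW)
    finally have "coeff ?E i \<in> ?G" using True i mW by auto
    then show ?thesis by (rule subalg_gen.gen)
  next
    case False
    then have "coeff ?E i = 0" using finite_Wset by (intro coeff_high_prod) auto
    then show ?thesis by (simp add: sg_0)
  qed
  have P: "Pw n Xd k d \<in> subalg_gen ?G" if "k \<ge> 1" for k
  proof -
    have N: "newton (coeff ?E) (\<lambda>k. \<Sum>M\<in>?W. wt n Xd M ^ k)"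
      using finite_Wset by (rule newton_prod)
    have "(\<lambda>k. \<Sum>M\<in>?W. wt n Xd M ^ k) k \<in> subalg_gen ?G"
    proof (rule newton_in_sg[OF N])
      show "coeff ?E 0 = 1" using finite_Wset by (rule coeff0_prod)
      show "\<And>i. 1 \<le> i \<Longrightarrow> coeff ?E i \<in> subalg_gen ?G" by (rule e)
      show "1 \<le> k" by (rule that)
    qed
    then show ?thesis by (simp add: Pw_def)
  qed
  have ps: "ps n Xd k \<in> subalg_gen ?G" if "k \<ge> 1" for k
    using P d that by (rule ps_in_sg)
  have "PSG n \<subseteq> subalg_gen ?G"
  proof
    fix x assume x: "x \<in> PSG n"
    have "{ps n Xd k | k. k \<ge> 1} \<subseteq> subalg_gen ?G" using ps by blast
    then show "x \<in> subalg_gen ?G" using x unfolding PSG_def by (rule sg_mono)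
  qed
  then show ?thesis
    unfolding coeff_algebra_def using sym_in_PSG by (meson subsetD subsetI)
qed


section \<open>Renaming of variables\<close>

lemma poly_mapping_expand:
  "p = (\<Sum>\<mu>\<in>Poly_Mapping.keys p. Poly_Mapping.single \<mu> (Poly_Mapping.lookup p \<mu>))"
proof (rule poly_mapping_eqI)
  fix k
  have "Poly_Mapping.lookup (\<Sum>\<mu>\<in>Poly_Mapping.keys p. Poly_Mapping.single \<mu> (Poly_Mapping.lookup p \<mu>)) k
      = (\<Sum>\<mu>\<in>Poly_Mapping.keys p. if \<mu> = k then Poly_Mapping.lookup p \<mu> else 0)"
    unfolding lookup_sum lookup_single by (intro sum.cong refl) (auto simp: when_def)
  also have "\<dots> = Poly_Mapping.lookup p k"
  proof (subst sum.delta)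
    show "finite (Poly_Mapping.keys p)" by simp
    show "(if k \<in> Poly_Mapping.keys p then Poly_Mapping.lookup p k else 0) = Poly_Mapping.lookup p k"
      using in_keys_iff by (metis (mono_tags))
  qed
  finally show "Poly_Mapping.lookup p k = Poly_Mapping.lookup (\<Sum>\<mu>\<in>Poly_Mapping.keys p. Poly_Mapping.single \<mu> (Poly_Mapping.lookup p \<mu>)) k" by simp
qed

locale mono_bij =
  fixes g h :: "('v \<Rightarrow>\<^sub>0 nat) \<Rightarrow> ('v \<Rightarrow>\<^sub>0 nat)"
  assumes gh: "\<And>x. g (h x) = x" and hg: "\<And>x. h (g x) = x"
    and h_add: "\<And>a b. h (a + b) = h a + h b"
begin

lemma inj_g: "inj g" by (metis hg injI)
lemma h0: "h 0 = 0" using h_add[of 0 0] by simp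

definition R :: "('v, 'a::comm_ring_1) mpoly \<Rightarrow> ('v, 'a) mpoly" where
  "R p = Poly_Mapping.map_key g p"

lemma lookup_R: "Poly_Mapping.lookup (R p) k = Poly_Mapping.lookup p (g k)"
  unfolding R_def using inj_g by (simp add: map_key.rep_eq)

lemma R_add: "R (p + q) = R p + R q"
  by (rule poly_mapping_eqI) (simp add: lookup_R lookup_add)

lemma R_zero: "R 0 = 0"
  by (rule poly_mapping_eqI) (simp add: lookup_R)

lemma R_sum: "R (sum f A) = (\<Sum>x\<in>A. R (f x))"
  by (induction A rule: infinite_finite_induct) (simp_all add: R_zero R_add)

lemma R_single: "R (Poly_Mapping.single \<mu> c) = Poly_Mapping.single (h \<mu>) c"
proof (rule poly_mapping_eqI)
  fix k
  have "\<mu> = g k \<longleftrightarrow> h \<mu> = k" using gh hg by metis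
  then show "Poly_Mapping.lookup (R (Poly_Mapping.single \<mu> c)) k = Poly_Mapping.lookup (Poly_Mapping.single (h \<mu>) c) k"
    by (simp add: lookup_R lookup_single when_def)
qed

lemma R_mult: "R (p * q) = R p * R q"
proof -
  let ?sp = "\<lambda>\<mu>. Poly_Mapping.single \<mu> (Poly_Mapping.lookup p \<mu>)"
  let ?sq = "\<lambda>\<mu>. Poly_Mapping.single \<mu> (Poly_Mapping.lookup q \<mu>)"
  have "p * q = (\<Sum>\<mu>\<in>Poly_Mapping.keys p. ?sp \<mu>) * (\<Sum>\<nu>\<in>Poly_Mapping.keys q. ?sq \<nu>)"
    by (subst (1) poly_mapping_expand[of p], subst (1) poly_mapping_expand[of q]) (rule refl)
  also have "\<dots> = (\<Sum>\<mu>\<in>Poly_Mapping.keys p. \<Sum>\<nu>\<in>Poly_Mapping.keys q. ?sp \<mu> * ?sq \<nu>)"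
    by (rule sum_product)
  finally have pq: "p * q = (\<Sum>\<mu>\<in>Poly_Mapping.keys p. \<Sum>\<nu>\<in>Poly_Mapping.keys q. ?sp \<mu> * ?sq \<nu>)" .
  have "R (p * q) = (\<Sum>\<mu>\<in>Poly_Mapping.keys p. \<Sum>\<nu>\<in>Poly_Mapping.keys q. R (?sp \<mu>) * R (?sq \<nu>))"
    unfolding pq R_sum by (simp add: mult_single R_single h_add)
  also have "\<dots> = (\<Sum>\<mu>\<in>Poly_Mapping.keys p. R (?sp \<mu>)) * (\<Sum>\<nu>\<in>Poly_Mapping.keys q. R (?sq \<nu>))"
    by (rule sum_product[symmetric])
  also have "\<dots> = R p * R q"
    by (subst (3) poly_mapping_expand[of p], subst (3) poly_mapping_expand[of q]) (simp only: R_sum)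
  finally show ?thesis .
qed

lemma R_one: "R 1 = 1"
  using R_single[of 0 1] by (simp add: h0)

lemma R_mconst: "R (mconst c) = mconst c"
  unfolding mconst_def by (simp add: R_single h0)

lemma R_of_nat: "R (of_nat k) = of_nat k"
  by (simp add: of_nat_mconst R_mconst)

lemma R_coeff_prod:
  "finite A \<Longrightarrow> R (coeff (\<Prod>x\<in>A. [:f x, 1:]) i) = coeff (\<Prod>x\<in>A. [:R (f x), 1:]) i"
proof (induction A arbitrary: i rule: finite_induct)
  case empty
  then show ?case by (simp add: coeff_1 R_one R_zero)
next
  case (insert y A)
  have Q: "(\<Prod>x\<in>insert y A. [:f x, 1:]) = [:f y, 1:] * (\<Prod>x\<in>A. [:f x, 1:])" using insert by simp
  have Q': "(\<Prod>x\<in>insert y A. [:R (f x), 1:]) = [:R (f y), 1:] * (\<Prod>x\<in>A. [:R (f x), 1:])" using insert by simp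
  show ?case
    unfolding Q Q' coeff_lin_mult' R_add R_mult insert.IH
    by (cases i) (simp_all add: shf_def R_zero insert.IH)
qed

end


lemma tau_comp: "bij \<sigma> \<Longrightarrow> tau \<sigma> \<circ> tau (inv_into UNIV \<sigma>) = id" "bij \<sigma> \<Longrightarrow> tau (inv_into UNIV \<sigma>) \<circ> tau \<sigma> = id"
  unfolding tau_def by (auto simp: fun_eq_iff bij_is_surj bij_is_inj surj_f_inv_f inv_into_f_f)

lemma perm_mono_bij:
  assumes p: "\<sigma> permutes {..<n}"
  shows "mono_bij (Poly_Mapping.map_key (tau \<sigma>)) (Poly_Mapping.map_key (tau (inv_into UNIV \<sigma>)))"
proof -
  have bij: "bij \<sigma>" using p by (rule permutes_bij)
  have bij': "bij (inv_into UNIV \<sigma>)" using bij by (rule bij_imp_bij_inv)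
  have i1: "inj (tau \<sigma>)" using bij by (intro inj_tau bij_is_inj)
  have i2: "inj (tau (inv_into UNIV \<sigma>))" using bij' by (intro inj_tau bij_is_inj)
  show ?thesis
  proof
    fix x :: "nat \<times> nat \<Rightarrow>\<^sub>0 nat"
    show "Poly_Mapping.map_key (tau \<sigma>) (Poly_Mapping.map_key (tau (inv_into UNIV \<sigma>)) x) = x"
      using i1 i2 tau_comp[OF bij] by (simp add: map_key_compose map_key_id[unfolded id_def[symmetric]])
    show "Poly_Mapping.map_key (tau (inv_into UNIV \<sigma>)) (Poly_Mapping.map_key (tau \<sigma>) x) = x"
      using i1 i2 tau_comp[OF bij] by (simp add: map_key_compose map_key_id[unfolded id_def[symmetric]])
  next
    fix a b :: "nat \<times> nat \<Rightarrow>\<^sub>0 nat"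
    show "Poly_Mapping.map_key (tau (inv_into UNIV \<sigma>)) (a + b) =
          Poly_Mapping.map_key (tau (inv_into UNIV \<sigma>)) a + Poly_Mapping.map_key (tau (inv_into UNIV \<sigma>)) b"
      using i2 by (rule map_key_plus)
  qed
qed

definition Rs :: "(nat \<Rightarrow> nat) \<Rightarrow> (nat \<times> nat, complex) mpoly \<Rightarrow> (nat \<times> nat, complex) mpoly" where
  "Rs \<sigma> = mono_bij.R (Poly_Mapping.map_key (tau \<sigma>))"

lemma lookup_Rs: "\<sigma> permutes {..<n} \<Longrightarrow> Poly_Mapping.lookup (Rs \<sigma> p) k = Poly_Mapping.lookup p (Poly_Mapping.map_key (tau \<sigma>) k)"
  unfolding Rs_def by (rule mono_bij.lookup_R[OF perm_mono_bij])

definition DG :: "nat \<Rightarrow> (nat \<times> nat, complex) mpoly set" where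
  "DG n = {p. \<forall>\<mu>\<in>Poly_Mapping.keys p. diagmono n \<mu>}"

lemma sym_char: "p \<in> symmetric_diag_polys n \<longleftrightarrow> p \<in> DG n \<and> (\<forall>\<sigma>. \<sigma> permutes {..<n} \<longrightarrow> Rs \<sigma> p = p)"
proof -
  have "(\<forall>\<mu>. Poly_Mapping.lookup p (Poly_Mapping.map_key (tau \<sigma>) \<mu>) = Poly_Mapping.lookup p \<mu>) \<longleftrightarrow> Rs \<sigma> p = p"
    if "\<sigma> permutes {..<n}" for \<sigma>
    using lookup_Rs[OF that] by (auto simp: poly_mapping_eq_iff fun_eq_iff)
  then show ?thesis
    unfolding symmetric_diag_polys_def DG_def diagmono_def tau_def by auto
qed

lemma diagmono_add: "diagmono n a \<Longrightarrow> diagmono n b \<Longrightarrow> diagmono n (a + b)"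
  unfolding diagmono_def
proof
  fix v assume a: "\<forall>v\<in>Poly_Mapping.keys a. \<exists>i<n. v = (i, i)" and b: "\<forall>v\<in>Poly_Mapping.keys b. \<exists>i<n. v = (i, i)"
    and v: "v \<in> Poly_Mapping.keys (a + b)"
  have "v \<in> Poly_Mapping.keys a \<union> Poly_Mapping.keys b" by (rule subsetD[OF keys_add v])
  then show "\<exists>i<n. v = (i, i)" using a b by blast
qed

lemma DG_const: "mconst c \<in> DG n"
  unfolding DG_def mem_Collect_eq
proof (intro ballI)
  fix \<mu> assume "\<mu> \<in> Poly_Mapping.keys (mconst c :: (nat \<times> nat, complex) mpoly)"
  then have "\<mu> = 0" unfolding mconst_def keys_single by (cases "c = 0") simp_all
  then show "diagmono n \<mu>" unfolding diagmono_def by simp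
qed

lemma DG_add: "p \<in> DG n \<Longrightarrow> q \<in> DG n \<Longrightarrow> p + q \<in> DG n"
  unfolding DG_def mem_Collect_eq
proof -
  assume p: "\<forall>\<mu>\<in>Poly_Mapping.keys p. diagmono n \<mu>" and q: "\<forall>\<mu>\<in>Poly_Mapping.keys q. diagmono n \<mu>"
  show "\<forall>\<mu>\<in>Poly_Mapping.keys (p + q). diagmono n \<mu>"
  proof
  fix \<mu> assume m: "\<mu> \<in> Poly_Mapping.keys (p + q)"
  have "\<mu> \<in> Poly_Mapping.keys p \<union> Poly_Mapping.keys q" by (rule subsetD[OF keys_add m])
  then show "diagmono n \<mu>" using p q by blast
  qed
qed

lemma DG_mult: "p \<in> DG n \<Longrightarrow> q \<in> DG n \<Longrightarrow> p * q \<in> DG n"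
  unfolding DG_def mem_Collect_eq
proof -
  assume p: "\<forall>\<mu>\<in>Poly_Mapping.keys p. diagmono n \<mu>" and q: "\<forall>\<mu>\<in>Poly_Mapping.keys q. diagmono n \<mu>"
  show "\<forall>\<mu>\<in>Poly_Mapping.keys (p * q). diagmono n \<mu>"
  proof
  fix \<mu> assume m: "\<mu> \<in> Poly_Mapping.keys (p * q)"
  have "\<mu> \<in> {a + b | a b. a \<in> Poly_Mapping.keys p \<and> b \<in> Poly_Mapping.keys q}" by (rule subsetD[OF keys_mult m])
  then obtain a b where "\<mu> = a + b" "a \<in> Poly_Mapping.keys p" "b \<in> Poly_Mapping.keys q" by blast
  then show "diagmono n \<mu>" using p q diagmono_add by simp
  qed
qed

lemma DG_Xd: "a < n \<Longrightarrow> Xd a \<in> DG n"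
  unfolding DG_def mvar_def diagmono_def keys_single by simp

lemma DG_sum: "(\<And>x. x \<in> A \<Longrightarrow> f x \<in> DG n) \<Longrightarrow> sum f A \<in> DG n"
  by (induction A rule: infinite_finite_induct) (auto intro: DG_add simp: DG_const[of 0, unfolded mconst_0])

lemma DG_of_nat: "of_nat k \<in> DG n"
  using DG_const[of "of_nat k"] by (simp add: of_nat_mconst)

lemma DG_wt: "wt n Xd M \<in> DG n"
  unfolding wt_def by (intro DG_sum DG_mult DG_of_nat DG_Xd) auto

lemma DG_coeff_prod:
  "finite A \<Longrightarrow> (\<And>x. x \<in> A \<Longrightarrow> f x \<in> DG n) \<Longrightarrow> coeff (\<Prod>x\<in>A. [:f x, 1:]) i \<in> DG n"
proof (induction A arbitrary: i rule: finite_induct)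
  case empty
  then show ?case using DG_const[of 0] DG_const[of 1] by (simp add: coeff_1 mconst_0 mconst_1)
next
  case (insert y A)
  have Q: "(\<Prod>x\<in>insert y A. [:f x, 1:]) = [:f y, 1:] * (\<Prod>x\<in>A. [:f x, 1:])" using insert by simp
  show ?case
    unfolding Q coeff_lin_mult'
    using insert DG_const[of 0] by (cases i) (auto simp: shf_def mconst_0 intro!: DG_add DG_mult)
qed

lemma sym_closed:
  fixes S :: "(nat \<times> nat, complex) mpoly set"
  assumes "S \<subseteq> symmetric_diag_polys n"
  shows "subalg_gen S \<subseteq> symmetric_diag_polys n"
proof
  fix p assume "p \<in> subalg_gen S"
  then show "p \<in> symmetric_diag_polys n"
  proof (induction p rule: subalg_gen.induct)
    case (const c)
    show ?case
    proof (subst sym_char, intro conjI allI impI)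
      show "mconst c \<in> DG n" by (rule DG_const)
      fix \<sigma> :: "nat \<Rightarrow> nat" assume p: "\<sigma> permutes {..<n}"
      show "Rs \<sigma> (mconst c) = mconst c" unfolding Rs_def by (rule mono_bij.R_mconst[OF perm_mono_bij[OF p]])
    qed
  next
    case (gen s)
    then show ?case using assms by auto
  next
    case (add p q)
    have p: "p \<in> DG n" "\<And>\<sigma>. \<sigma> permutes {..<n} \<Longrightarrow> Rs \<sigma> p = p" using add.IH(1) sym_char by blast+
    have q: "q \<in> DG n" "\<And>\<sigma>. \<sigma> permutes {..<n} \<Longrightarrow> Rs \<sigma> q = q" using add.IH(2) sym_char by blast+
    show ?case
    proof (subst sym_char, intro conjI allI impI)
      show "p + q \<in> DG n" using p q by (intro DG_add)
      fix \<sigma> :: "nat \<Rightarrow> nat" assume s: "\<sigma> permutes {..<n}"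
      show "Rs \<sigma> (p + q) = p + q"
        using mono_bij.R_add[OF perm_mono_bij[OF s], of p q] p(2)[OF s] q(2)[OF s] unfolding Rs_def by simp
    qed
  next
    case (mult p q)
    have p: "p \<in> DG n" "\<And>\<sigma>. \<sigma> permutes {..<n} \<Longrightarrow> Rs \<sigma> p = p" using mult.IH(1) sym_char by blast+
    have q: "q \<in> DG n" "\<And>\<sigma>. \<sigma> permutes {..<n} \<Longrightarrow> Rs \<sigma> q = q" using mult.IH(2) sym_char by blast+
    show ?case
    proof (subst sym_char, intro conjI allI impI)
      show "p * q \<in> DG n" using p q by (intro DG_mult)
      fix \<sigma> :: "nat \<Rightarrow> nat" assume s: "\<sigma> permutes {..<n}"
      show "Rs \<sigma> (p * q) = p * q"
        using mono_bij.R_mult[OF perm_mono_bij[OF s], of p q] p(2)[OF s] q(2)[OF s] unfolding Rs_def by simp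
    qed
  qed
qed


lemma Rs_Xd:
  assumes p: "\<sigma> permutes {..<n}"
  shows "Rs \<sigma> (Xd a) = Xd (\<sigma> a)"
proof -
  have bij: "bij \<sigma>" using p by (rule permutes_bij)
  have i2: "inj (tau (inv_into UNIV \<sigma>))" using bij_imp_bij_inv[OF bij] by (intro inj_tau bij_is_inj)
  have t: "tau (inv_into UNIV \<sigma>) (\<sigma> a, \<sigma> a) = (a, a)"
    unfolding tau_def using bij by (simp add: bij_is_inj inv_into_f_f)
  have "Poly_Mapping.map_key (tau (inv_into UNIV \<sigma>)) (Poly_Mapping.single (a, a) 1) = Poly_Mapping.single (\<sigma> a, \<sigma> a) (1::nat)"
    unfolding t[symmetric] using i2 by (rule map_key_single)
  then show ?thesis
    unfolding Rs_def mvar_def by (simp add: mono_bij.R_single[OF perm_mono_bij[OF p]])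
qed

lemma count_image_bij: "inj f \<Longrightarrow> count (image_mset f M) (f a) = count M a"
proof -
  assume inj: "inj f"
  have "f -` {f a} = {a}" using inj by (auto dest: injD)
  then show ?thesis by (cases "a \<in># M") (simp_all add: count_image_mset not_in_iff)
qed

lemma Rs_wt:
  assumes p: "\<sigma> permutes {..<n}"
  shows "Rs \<sigma> (wt n Xd M) = wt n Xd (image_mset \<sigma> M)"
proof -
  have inj: "inj \<sigma>" using p by (rule permutes_inj)
  have "Rs \<sigma> (wt n Xd M) = (\<Sum>a<n. of_nat (count M a) * Xd (\<sigma> a))"
    unfolding wt_def Rs_def mono_bij.R_sum[OF perm_mono_bij[OF p]]
    by (intro sum.cong refl)
       (simp add: mono_bij.R_mult[OF perm_mono_bij[OF p]] mono_bij.R_of_nat[OF perm_mono_bij[OF p]]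
          Rs_Xd[OF p, unfolded Rs_def])
  also have "\<dots> = (\<Sum>a<n. of_nat (count (image_mset \<sigma> M) (\<sigma> a)) * Xd (\<sigma> a))"
    using inj by (simp add: count_image_bij)
  also have "\<dots> = (\<Sum>b\<in>\<sigma> ` {..<n}. of_nat (count (image_mset \<sigma> M) b) * Xd b)"
    using inj by (subst sum.reindex) (auto intro: inj_on_subset)
  also have "\<sigma> ` {..<n} = {..<n}" using p by (rule permutes_image)
  finally show ?thesis unfolding wt_def .
qed

lemma prod_Wset_perm:
  assumes p: "\<sigma> permutes {..<n}"
  shows "(\<Prod>M\<in>Wset n d. F (image_mset \<sigma> M)) = (\<Prod>M\<in>Wset n d. F M)"
proof -
  have bij: "bij \<sigma>" using p by (rule permutes_bij)
  have p': "inv_into UNIV \<sigma> permutes {..<n}" using p by (rule permutes_inv)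
  have c1: "inv_into UNIV \<sigma> \<circ> \<sigma> = id" using bij by (simp add: bij_is_inj inj_iff[symmetric])
  have c2: "\<sigma> \<circ> inv_into UNIV \<sigma> = id" using bij by (simp add: bij_is_surj surj_iff[symmetric])
  have memW: "image_mset \<tau> M \<in> Wset n d" if "\<tau> permutes {..<n}" "M \<in> Wset n d" for \<tau> M
  proof -
    have "set_mset (image_mset \<tau> M) = \<tau> ` set_mset M" by simp
    also have "\<dots> \<subseteq> \<tau> ` {..<n}" using that by (auto simp: Wset_def)
    also have "\<dots> = {..<n}" using that(1) by (rule permutes_image)
    finally show ?thesis using that by (simp add: Wset_def)
  qed
  show ?thesis
  proof (rule prod.reindex_bij_witness[where j = "image_mset \<sigma>" and i = "image_mset (inv_into UNIV \<sigma>)"])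
    fix M assume "M \<in> Wset n d"
    show "image_mset (inv_into UNIV \<sigma>) (image_mset \<sigma> M) = M" by (simp add: multiset.map_comp c1)
    show "image_mset \<sigma> M \<in> Wset n d" using p \<open>M \<in> Wset n d\<close> by (rule memW)
    show "F (image_mset \<sigma> M) = F (image_mset \<sigma> M)" ..
  next
    fix M assume "M \<in> Wset n d"
    show "image_mset \<sigma> (image_mset (inv_into UNIV \<sigma>) M) = M" by (simp add: multiset.map_comp c2)
    show "image_mset (inv_into UNIV \<sigma>) M \<in> Wset n d" using p' \<open>M \<in> Wset n d\<close> by (rule memW)
  qed
qed

lemma gen_sym: "coeff (\<Prod>M\<in>Wset n d. [:wt n Xd M, 1:]) i \<in> symmetric_diag_polys n"
proof (subst sym_char, intro conjI allI impI)
  show "coeff (\<Prod>M\<in>Wset n d. [:wt n Xd M, 1:]) i \<in> DG n"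
    using finite_Wset by (rule DG_coeff_prod) (rule DG_wt)
  fix \<sigma> :: "nat \<Rightarrow> nat" assume p: "\<sigma> permutes {..<n}"
  have "Rs \<sigma> (coeff (\<Prod>M\<in>Wset n d. [:wt n Xd M, 1:]) i) = coeff (\<Prod>M\<in>Wset n d. [:Rs \<sigma> (wt n Xd M), 1:]) i"
    unfolding Rs_def using finite_Wset by (rule mono_bij.R_coeff_prod[OF perm_mono_bij[OF p]])
  also have "\<dots> = coeff (\<Prod>M\<in>Wset n d. [:wt n Xd (image_mset \<sigma> M), 1:]) i"
    by (simp add: Rs_wt[OF p])
  also have "(\<Prod>M\<in>Wset n d. [:wt n Xd (image_mset \<sigma> M), 1:]) = (\<Prod>M\<in>Wset n d. [:wt n Xd M, 1:])"
    using p by (rule prod_Wset_perm)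
  finally show "Rs \<sigma> (coeff (\<Prod>M\<in>Wset n d. [:wt n Xd M, 1:]) i) = coeff (\<Prod>M\<in>Wset n d. [:wt n Xd M, 1:]) i" .
qed

theorem theorem1p1:
  fixes n d :: nat
  assumes "n \<ge> 2" and "d \<ge> 1"
  shows "coeff_algebra (length (sym_basis n d)) (ut_basis n)
           (\<lambda>(i, j). sym_power_mat n d (matrix_unit i j) :: complex mat)
         = symmetric_diag_polys n"
proof
  show "coeff_algebra (length (sym_basis n d)) (ut_basis n)
           (\<lambda>(i, j). sym_power_mat n d (matrix_unit i j) :: complex mat) \<subseteq> symmetric_diag_polys n"
    unfolding coeff_algebra_def
  proof (rule sym_closed)
    show "{coeff (lie_char_poly (length (sym_basis n d)) (ut_basis n)
              (\<lambda>(i, j). sym_power_mat n d (matrix_unit i j) :: complex mat)) (length (sym_basis n d) - i) | i.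
            1 \<le> i \<and> i \<le> length (sym_basis n d)} \<subseteq> symmetric_diag_polys n"
      unfolding char_poly_prod using gen_sym by blast
  qed
  show "symmetric_diag_polys n \<subseteq> coeff_algebra (length (sym_basis n d)) (ut_basis n)
           (\<lambda>(i, j). sym_power_mat n d (matrix_unit i j) :: complex mat)"
    using assms(2) by (rule sym_subset_coeff_algebra)
qed


end
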